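(* Let $\varepsilon>0$, $F\in C^1(\mathbb{R})$ and $a\in C(]0,1[\times[0,\infty)\times\mathbb{R}^4)$, and consider for $t_0\ge0$ the problem $$-\varepsilon u_{xxt}+u_{tt}-u_{xx}=F(u)-a(x,t,u,u_x,u_{xx},u_t)\,u_t,\quad x\in(0,1),\ t>t_0,\qquad u(0,t)=u(1,t)=0,$$ with $u(x,t_0)=u_0(x)$, $u_t(x,t_0)=u_1(x)$, $u_0(0)=u_0(1)=u_1(0)=u_1(1)=0$. Assume: $F(0)=0$ and there is a constant $K>0$ with $F'(s)\le K<3\pi^2/4$ for all $s$; $\inf a>-\varepsilon\pi^2$; and there exists a nondecreasing map $A:[0,\infty)\to[0,\infty)$ such that $|a(x,t,\varphi,\varphi_x,\varphi_{xx},\psi)|\le A\big(d_1(\varphi,\psi)\big)$ for all $x,t$ and $(\varphi,\psi)\in\Gamma$. Then the null solution is exponential-asymptotically stable in the large.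
   Context: $\Gamma:=\{(\varphi,\psi):\varphi\in C^2([0,1]),\ \psi\in C([0,1]),\ \varphi(0)=\varphi(1)=\psi(0)=\psi(1)=0\}$, $d^2(\varphi,\psi):=\int_0^1(\varphi^2+\varphi_x^2+\varphi_{xx}^2+\psi^2)dx$, $d_1^2(\varphi,\psi):=\int_0^1(\varphi^2+\varphi_x^2+\psi^2)dx$. The null solution is exponential-asymptotically stable in the large if for every $\alpha>0$ there are constants $D(\alpha),C(\alpha)>0$ such that, for every $t_0\ge0$ and initial data with $d(u_0,u_1)\le\alpha$, the solution satisfies $d(u(\cdot,t),u_t(\cdot,t))\le D(\alpha)e^{-C(\alpha)(t-t_0)}d(u_0,u_1)$ for all $t\ge t_0$. *)

theory Defs
  imports "HOL-Analysis.Analysis"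
begin

definition C2_01 :: "(real \<Rightarrow> real) \<Rightarrow> bool" where
  "C2_01 \<phi> \<longleftrightarrow> (\<exists>\<phi>' \<phi>''.
      (\<forall>x\<in>{0..1}. (\<phi> has_real_derivative \<phi>' x) (at x within {0..1})) \<and>
      (\<forall>x\<in>{0..1}. (\<phi>' has_real_derivative \<phi>'' x) (at x within {0..1})) \<and>
      continuous_on {0..1} \<phi>'')"

definition Gamma :: "((real \<Rightarrow> real) \<times> (real \<Rightarrow> real)) set" where
  "Gamma = {(\<phi>, \<psi>). C2_01 \<phi> \<and> continuous_on {0..1} \<psi> \<and>
              \<phi> 0 = 0 \<and> \<phi> 1 = 0 \<and> \<psi> 0 = 0 \<and> \<psi> 1 = 0}"

definition dist_d :: "(real \<Rightarrow> real) \<Rightarrow> (real \<Rightarrow> real) \<Rightarrow> real" where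
  "dist_d \<phi> \<psi> = sqrt (integral {0..1}
      (\<lambda>x. (\<phi> x)\<^sup>2 + (deriv \<phi> x)\<^sup>2 + (deriv (deriv \<phi>) x)\<^sup>2 + (\<psi> x)\<^sup>2))"

definition dist_d1 :: "(real \<Rightarrow> real) \<Rightarrow> (real \<Rightarrow> real) \<Rightarrow> real" where
  "dist_d1 \<phi> \<psi> = sqrt (integral {0..1}
      (\<lambda>x. (\<phi> x)\<^sup>2 + (deriv \<phi> x)\<^sup>2 + (\<psi> x)\<^sup>2))"

definition is_solution ::
  "real \<Rightarrow> (real \<Rightarrow> real) \<Rightarrow> (real \<Rightarrow> real \<Rightarrow> real \<Rightarrow> real \<Rightarrow> real \<Rightarrow> real \<Rightarrow> real)
   \<Rightarrow> real \<Rightarrow> (real \<Rightarrow> real \<Rightarrow> real) \<Rightarrow> (real \<Rightarrow> real \<Rightarrow> real) \<Rightarrow> bool" where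
  "is_solution \<epsilon> F a t0 u v \<longleftrightarrow> (\<exists>ux uxx uxt uxxt utt.
     (\<forall>x\<in>{0..1}. \<forall>t\<in>{t0..}.
        ((\<lambda>y. u y t) has_real_derivative ux x t) (at x within {0..1}) \<and>
        ((\<lambda>y. ux y t) has_real_derivative uxx x t) (at x within {0..1}) \<and>
        ((\<lambda>s. u x s) has_real_derivative v x t) (at t within {t0..}) \<and>
        ((\<lambda>y. v y t) has_real_derivative uxt x t) (at x within {0..1}) \<and>
        ((\<lambda>y. uxt y t) has_real_derivative uxxt x t) (at x within {0..1}) \<and>
        ((\<lambda>s. v x s) has_real_derivative utt x t) (at t within {t0..})) \<and>
     continuous_on ({0..1} \<times> {t0..}) (\<lambda>(x,t). u x t) \<and>
     continuous_on ({0..1} \<times> {t0..}) (\<lambda>(x,t). ux x t) \<and>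
     continuous_on ({0..1} \<times> {t0..}) (\<lambda>(x,t). uxx x t) \<and>
     continuous_on ({0..1} \<times> {t0..}) (\<lambda>(x,t). v x t) \<and>
     continuous_on ({0..1} \<times> {t0..}) (\<lambda>(x,t). uxt x t) \<and>
     continuous_on ({0..1} \<times> {t0..}) (\<lambda>(x,t). uxxt x t) \<and>
     continuous_on ({0..1} \<times> {t0..}) (\<lambda>(x,t). utt x t) \<and>
     (\<forall>x\<in>{0<..<1}. \<forall>t\<in>{t0<..}.
        - \<epsilon> * uxxt x t + utt x t - uxx x t
          = F (u x t) - a x t (u x t) (ux x t) (uxx x t) (v x t) * v x t) \<and>
     (\<forall>t\<in>{t0..}. u 0 t = 0 \<and> u 1 t = 0))"

definition exp_stable_in_large ::
  "real \<Rightarrow> (real \<Rightarrow> real) \<Rightarrow> (real \<Rightarrow> real \<Rightarrow> real \<Rightarrow> real \<Rightarrow> real \<Rightarrow> real \<Rightarrow> real) \<Rightarrow> bool" where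
  "exp_stable_in_large \<epsilon> F a \<longleftrightarrow> (\<forall>\<alpha>>0. \<exists>D C. D > 0 \<and> C > 0 \<and>
     (\<forall>t0\<ge>0. \<forall>u0 u1 u v.
        (u0, u1) \<in> Gamma \<and> dist_d u0 u1 \<le> \<alpha> \<and> is_solution \<epsilon> F a t0 u v \<and>
        (\<forall>x\<in>{0..1}. u x t0 = u0 x \<and> v x t0 = u1 x) \<longrightarrow>
        (\<forall>t\<ge>t0. dist_d (\<lambda>x. u x t) (\<lambda>x. v x t) \<le> D * exp (- C * (t - t0)) * dist_d u0 u1)))"

end

theory Submission
  imports Defs
begin

lemma cont_swap01:
  fixes f :: "real \<Rightarrow> real \<Rightarrow> real"
  assumes "continuous_on ({0..1} \<times> {t0..}) (\<lambda>(x,t). f x t)"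
  shows "continuous_on ({t0..} \<times> cbox 0 (1::real)) (\<lambda>(t,x). f x (t::real))"
proof -
  have sub: "(\<lambda>p. (snd p, fst p)) ` ({t0..} \<times> cbox 0 (1::real)) \<subseteq> {0..1} \<times> {t0..}"
    by auto
  have "continuous_on ({t0..} \<times> cbox 0 (1::real)) (\<lambda>p. (\<lambda>(x,t). f x t) ((\<lambda>p. (snd p, fst p)) p))"
    by (rule continuous_on_compose2[OF assms _ sub]) (auto intro!: continuous_intros)
  then show ?thesis by (simp add: split_beta)
qed

lemma cont_slice_x:
  fixes f :: "real \<Rightarrow> real \<Rightarrow> real"
  assumes "continuous_on ({0..1} \<times> {t0..}) (\<lambda>(x,t). f x t)" "s \<ge> t0"
  shows "continuous_on {0..1} (\<lambda>x. f x (s::real))"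
proof -
  have sub: "(\<lambda>x. (x, s)) ` {0..1::real} \<subseteq> {0..1} \<times> {t0..}" using assms(2) by auto
  have "continuous_on {0..1} (\<lambda>x. (\<lambda>(x,t). f x t) ((\<lambda>x. (x, s)) x))"
    by (rule continuous_on_compose2[OF assms(1) _ sub]) (auto intro!: continuous_intros)
  then show ?thesis by simp
qed

lemma cont_slice_t:
  fixes f :: "real \<Rightarrow> real \<Rightarrow> real"
  assumes "continuous_on ({0..1} \<times> {t0..}) (\<lambda>(x,t). f x t)" "x \<in> {0..1}"
  shows "continuous_on {t0..} (\<lambda>t. f x (t::real))"
proof -
  have sub: "(\<lambda>t. (x, t)) ` {t0..} \<subseteq> {0..1} \<times> {t0..}" using assms(2) by auto
  have "continuous_on {t0..} (\<lambda>t. (\<lambda>(x,t). f x t) ((\<lambda>t. (x, t)) t))"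
    by (rule continuous_on_compose2[OF assms(1) _ sub]) (auto intro!: continuous_intros)
  then show ?thesis by simp
qed

lemma deriv_int01:
  fixes f ft :: "real \<Rightarrow> real \<Rightarrow> real"
  assumes d: "\<And>x t. x \<in> {0..1} \<Longrightarrow> t \<in> {t0..} \<Longrightarrow> ((\<lambda>s. f x s) has_real_derivative ft x t) (at t within {t0..})"
    and cf: "continuous_on ({0..1} \<times> {t0..}) (\<lambda>(x,t). f x t)"
    and cft: "continuous_on ({0..1} \<times> {t0..}) (\<lambda>(x,t). ft x t)"
    and t: "t \<in> {t0..}"
  shows "((\<lambda>s. integral {0..1} (\<lambda>x. f x s)) has_real_derivative integral {0..1} (\<lambda>x. ft x t)) (at t within {t0..})"
proof -
  have c1: "continuous_on ({t0..} \<times> cbox 0 (1::real)) (\<lambda>(t,x). ft x t)"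
    using cont_swap01[OF cft] .
  have c2: "continuous_on ({t0..} \<times> cbox 0 (1::real)) (\<lambda>(t,x). f x t)"
    using cont_swap01[OF cf] .
  have "((\<lambda>s. integral (cbox 0 1) (\<lambda>x. f x s)) has_field_derivative integral (cbox 0 1) (\<lambda>x. ft x t)) (at t within {t0..})"
  proof (rule leibniz_rule_field_derivative[where fx="\<lambda>s x. ft x s"])
    show "\<And>s x. s \<in> {t0..} \<Longrightarrow> x \<in> cbox 0 1 \<Longrightarrow> ((\<lambda>s. f x s) has_field_derivative ft x s) (at s within {t0..})"
      using d by auto
    show "\<And>s. s \<in> {t0..} \<Longrightarrow> (\<lambda>x. f x s) integrable_on cbox 0 1"
    proof -
      fix s :: real assume s: "s \<in> {t0..}"
      have "continuous_on (cbox 0 1) (\<lambda>x. f x s)"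
        using cont_slice_x[OF cf, of s] s by simp
      then show "(\<lambda>x. f x s) integrable_on cbox 0 1" by (rule integrable_continuous)
    qed
    show "continuous_on ({t0..} \<times> cbox 0 1) (\<lambda>(s, x). ft x s)" using c1 .
  qed (use t in auto)
  then show ?thesis by simp
qed

lemma within_Icc_Ici:
  fixes f :: "real \<Rightarrow> real"
  assumes "(f has_real_derivative D) (at t within {a..b})" "t < b"
  shows "(f has_real_derivative D) (at t within {a..})"
proof -
  have "at t within {a..b} = at t within {a..}"
    by (rule at_within_nhd[where S="{..<b}"]) (use assms(2) in auto)
  then show ?thesis using assms(1) by simp
qed

lemma within_Ici_at:
  fixes f :: "real \<Rightarrow> real"
  assumes "(f has_real_derivative D) (at t within {a..})" "a < t"
  shows "(f has_real_derivative D) (at t)"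
proof -
  have "at t within {a..} = at t"
    by (rule at_within_interior) (use assms(2) in auto)
  then show ?thesis using assms(1) by simp
qed

lemma not_bot_01: "x \<in> {0..1::real} \<Longrightarrow> at x within {0..1} \<noteq> bot"
  using trivial_limit_within[of x "{0..1::real}"] by (simp add: trivial_limit_def)

lemma not_bot_Ici: "x \<in> {a::real..} \<Longrightarrow> at x within {a..} \<noteq> bot"
proof -
  assume x: "x \<in> {a..}"
  have "x islimpt {a..x+1}" using x by simp
  then have "x islimpt {a..}" by (rule islimpt_subset) auto
  then show ?thesis using trivial_limit_within[of x "{a..}"] by (simp add: trivial_limit_def)
qed

lemma ftc_Ici:
  fixes f g :: "real \<Rightarrow> real"
  assumes d: "\<And>t. t \<in> {t0..} \<Longrightarrow> (f has_real_derivative g t) (at t within {t0..})"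
    and cg: "continuous_on {t0..} g" and s: "s \<ge> t0"
  shows "f s = f t0 + integral {t0..s} g"
proof -
  have "(g has_integral (f s - f t0)) {t0..s}"
    apply (rule fundamental_theorem_of_calculus[OF s])
  proof -
    fix x assume x: "x \<in> {t0..s}"
    have "(f has_real_derivative g x) (at x within {t0..s})"
      using DERIV_subset[OF d[of x], of "{t0..s}"] x by auto
    then show "(f has_vector_derivative g x) (at x within {t0..s})"
      by (simp add: has_real_derivative_iff_has_vector_derivative)
  qed
  then show ?thesis by (simp add: integral_unique)
qed

lemma deriv_integral_Ici:
  fixes g :: "real \<Rightarrow> real"
  assumes cg: "continuous_on {t0..} g" and t: "t \<ge> t0"
  shows "((\<lambda>s. integral {t0..s} g) has_real_derivative g t) (at t within {t0..})"
proof -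
  have "continuous_on {t0..t+1} g" using cg by (rule continuous_on_subset) auto
  from integral_has_real_derivative[OF this, of t] t
  have "((\<lambda>s. integral {t0..s} g) has_real_derivative g t) (at t within {t0..t+1})" by simp
  then show ?thesis by (rule within_Icc_Ici) simp
qed


lemma mixed_partial:
  fixes f g h k :: "real \<Rightarrow> real \<Rightarrow> real"
  assumes ft: "\<And>x t. x \<in> {0..1} \<Longrightarrow> t \<in> {t0..} \<Longrightarrow> ((\<lambda>s. f x s) has_real_derivative g x t) (at t within {t0..})"
    and fx: "\<And>x t. x \<in> {0..1} \<Longrightarrow> t \<in> {t0..} \<Longrightarrow> ((\<lambda>y. f y t) has_real_derivative h x t) (at x within {0..1})"
    and gx: "\<And>x t. x \<in> {0..1} \<Longrightarrow> t \<in> {t0..} \<Longrightarrow> ((\<lambda>y. g y t) has_real_derivative k x t) (at x within {0..1})"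
    and cg: "continuous_on ({0..1} \<times> {t0..}) (\<lambda>(x,t). g x t)"
    and ck: "continuous_on ({0..1} \<times> {t0..}) (\<lambda>(x,t). k x t)"
    and x: "x \<in> {0..1}" and t: "t \<in> {t0..}"
  shows "((\<lambda>s. h x s) has_real_derivative k x t) (at t within {t0..})"
proof -
  have eq1: "f y s = f y t0 + integral {t0..s} (\<lambda>\<tau>. g y \<tau>)" if "y \<in> {0..1}" "s \<ge> t0" for y s
    by (rule ftc_Ici[OF _ cont_slice_t[OF cg]]) (use that ft in \<open>auto\<close>)
  have eq2: "h y s = h y t0 + integral {t0..s} (\<lambda>\<tau>. k y \<tau>)" if y: "y \<in> {0..1}" and s: "s \<ge> t0" for y s
  proof -
    have ck': "continuous_on ({0..1} \<times> cbox t0 s) (\<lambda>(x,t). k x t)"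
      using ck by (rule continuous_on_subset) auto
    have L: "((\<lambda>z. integral (cbox t0 s) (\<lambda>\<tau>. g z \<tau>)) has_field_derivative integral (cbox t0 s) (\<lambda>\<tau>. k y \<tau>)) (at y within {0..1})"
    proof (rule leibniz_rule_field_derivative[where fx="\<lambda>z \<tau>. k z \<tau>"])
      show "\<And>z \<tau>. z \<in> {0..1} \<Longrightarrow> \<tau> \<in> cbox t0 s \<Longrightarrow> ((\<lambda>z. g z \<tau>) has_field_derivative k z \<tau>) (at z within {0..1})"
        using gx by auto
      show "\<And>z. z \<in> {0..1} \<Longrightarrow> (\<lambda>\<tau>. g z \<tau>) integrable_on cbox t0 s"
      proof -
        fix z :: real assume "z \<in> {0..1}"
        from cont_slice_t[OF cg this] have "continuous_on (cbox t0 s) (\<lambda>\<tau>. g z \<tau>)"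
          by (rule continuous_on_subset) auto
        then show "(\<lambda>\<tau>. g z \<tau>) integrable_on cbox t0 s" by (rule integrable_continuous)
      qed
    qed (use ck' y in \<open>auto\<close>)
    have L2: "((\<lambda>z. f z s) has_field_derivative h y t0 + integral {t0..s} (\<lambda>\<tau>. k y \<tau>)) (at y within {0..1})"
    proof (rule has_field_derivative_transform_within[where f="\<lambda>z. f z t0 + integral {t0..s} (\<lambda>\<tau>. g z \<tau>)" and d=1])
      show "((\<lambda>z. f z t0 + integral {t0..s} (\<lambda>\<tau>. g z \<tau>)) has_real_derivative h y t0 + integral {t0..s} (\<lambda>\<tau>. k y \<tau>)) (at y within {0..1})"
        using DERIV_add[OF fx[OF y, of t0] L] y s by simp
      show "f z t0 + integral {t0..s} (\<lambda>\<tau>. g z \<tau>) = f z s" if "z \<in> {0..1}" for z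
        using eq1[OF that s] by simp
    qed (use y in auto)
    show ?thesis
      using has_field_derivative_unique[OF fx[OF y, of s] L2 not_bot_01[OF y]] s by simp
  qed
  have "((\<lambda>s. h x t0 + integral {t0..s} (\<lambda>\<tau>. k x \<tau>)) has_real_derivative k x t) (at t within {t0..})"
    using DERIV_add[OF DERIV_const deriv_integral_Ici[OF cont_slice_t[OF ck x], of t]] t by simp
  then show ?thesis
  proof (rule has_field_derivative_transform_within[where d=1])
    show "h x t0 + integral {t0..s} (\<lambda>\<tau>. k x \<tau>) = h x s" if "s \<in> {t0..}" for s
      using eq2[OF x, of s] that by simp
  qed (use t in auto)
qed

lemma cont_from_deriv01:
  fixes f :: "real \<Rightarrow> real"
  assumes "\<And>x. x \<in> {0..1} \<Longrightarrow> (f has_real_derivative f' x) (at x within {0..1})"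
  shows "continuous_on {0..1} f"
  unfolding continuous_on_eq_continuous_within
proof
  fix x :: real assume "x \<in> {0..1}"
  from DERIV_continuous[OF assms[OF this]] show "continuous (at x within {0..1}) f" .
qed

lemma int_le_open01:
  fixes f g :: "real \<Rightarrow> real"
  assumes cf: "continuous_on {0..1} f" and cg: "continuous_on {0..1} g"
    and le: "\<And>x. x \<in> {0<..<1} \<Longrightarrow> f x \<le> g x"
  shows "integral {0..1} f \<le> integral {0..1} g"
proof -
  have cl: "closure {0<..<(1::real)} = {0..1}" by simp
  have "f x \<le> g x" if x: "x \<in> {0..1}" for x
  proof -
    have "0 \<le> (\<lambda>x. g x - f x) x"
    proof (rule continuous_ge_on_closure[where S="{0<..<1}" and f="\<lambda>x. g x - f x" and a=0])
      show "continuous_on (closure {0<..<1}) (\<lambda>x. g x - f x)"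
        unfolding cl using cf cg by (intro continuous_intros)
      show "x \<in> closure {0<..<1}" using x cl by simp
      show "\<And>x. x \<in> {0<..<1} \<Longrightarrow> 0 \<le> g x - f x" using le by force
    qed
    then show ?thesis by simp
  qed
  then show ?thesis using cf cg by (intro integral_le integrable_continuous_real) auto
qed

lemma ibp01:
  fixes f g f' g' :: "real \<Rightarrow> real"
  assumes df: "\<And>x. x \<in> {0..1} \<Longrightarrow> (f has_real_derivative f' x) (at x within {0..1})"
    and dg: "\<And>x. x \<in> {0..1} \<Longrightarrow> (g has_real_derivative g' x) (at x within {0..1})"
    and cf': "continuous_on {0..1} f'" and cg': "continuous_on {0..1} g'"
    and b0: "f 0 * g 0 = 0" and b1: "f 1 * g 1 = 0"
  shows "integral {0..1} (\<lambda>x. f' x * g x) = - integral {0..1} (\<lambda>x. f x * g' x)"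
proof -
  have cf: "continuous_on {0..1} f" by (rule cont_from_deriv01[OF df])
  have cg: "continuous_on {0..1} g" by (rule cont_from_deriv01[OF dg])
  have "((\<lambda>x. f' x * g x + f x * g' x) has_integral (f 1 * g 1 - f 0 * g 0)) {0..1}"
  proof (rule fundamental_theorem_of_calculus[where f="\<lambda>x. f x * g x"])
    fix x :: real assume x: "x \<in> {0..1}"
    from DERIV_mult[OF df[OF x] dg[OF x]]
    have "((\<lambda>x. f x * g x) has_real_derivative f' x * g x + f x * g' x) (at x within {0..1})"
      by (simp add: mult.commute)
    then show "((\<lambda>x. f x * g x) has_vector_derivative f' x * g x + f x * g' x) (at x within {0..1})"
      by (simp add: has_real_derivative_iff_has_vector_derivative)
  qed simp
  then have "integral {0..1} (\<lambda>x. f' x * g x + f x * g' x) = 0" using b0 b1 by (simp add: integral_unique)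
  moreover have "integral {0..1} (\<lambda>x. f' x * g x + f x * g' x) = integral {0..1} (\<lambda>x. f' x * g x) + integral {0..1} (\<lambda>x. f x * g' x)"
    by (rule integral_add) (auto intro!: integrable_continuous_real continuous_intros cf cg cf' cg')
  ultimately show ?thesis by linarith
qed

lemma poincare01:
  fixes f f' :: "real \<Rightarrow> real" and c :: real
  assumes df: "\<And>x. x \<in> {0..1} \<Longrightarrow> (f has_real_derivative f' x) (at x within {0..1})"
    and cf': "continuous_on {0..1} f'" and f0: "f 0 = 0" and f1: "f 1 = 0"
    and c: "0 < c" "c < pi"
  shows "c\<^sup>2 * integral {0..1} (\<lambda>x. (f x)\<^sup>2) \<le> integral {0..1} (\<lambda>x. (f' x)\<^sup>2)"
proof -
  have cf: "continuous_on {0..1} f" by (rule cont_from_deriv01[OF df])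
  define \<phi> where "\<phi> x = - c * tan (c * (x - 1/2))" for x
  have cosne: "cos (c * (x - 1/2)) \<noteq> 0" if "x \<in> {0..1}" for x
  proof -
    have "\<bar>x - 1/2\<bar> \<le> 1/2" using that unfolding abs_le_iff by auto
    then have "\<bar>c * (x - 1/2)\<bar> \<le> c * (1/2)" using c by (simp add: abs_mult mult_left_mono)
    then have "\<bar>c * (x - 1/2)\<bar> < pi/2" using c by linarith
    then have "0 < cos (c * (x - 1/2))" by (intro cos_gt_zero_pi) auto
    then show ?thesis by simp
  qed
  have dphi: "(\<phi> has_real_derivative (-c\<^sup>2 - (\<phi> x)\<^sup>2)) (at x within {0..1})" if x: "x \<in> {0..1}" for x
  proof -
    let ?z = "c * (x - 1/2)"
    have d1: "((\<lambda>x. c * (x - 1/2)) has_real_derivative c) (at x within {0..1})"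
      by (rule derivative_eq_intros refl | simp)+
    have d2: "(tan has_real_derivative inverse ((cos ?z)\<^sup>2)) (at ?z)"
      using DERIV_tan[OF cosne[OF x]] .
    have "((\<lambda>x. tan (c * (x - 1/2))) has_real_derivative inverse ((cos ?z)\<^sup>2) * c) (at x within {0..1})"
      using DERIV_chain2[OF d2 d1] .
    then have "(\<phi> has_real_derivative - c * (inverse ((cos ?z)\<^sup>2) * c)) (at x within {0..1})"
      unfolding \<phi>_def[abs_def] by (rule DERIV_cmult)
    moreover have "inverse ((cos ?z)\<^sup>2) = 1 + (tan ?z)\<^sup>2"
    proof -
      have "(sin ?z)\<^sup>2 + (cos ?z)\<^sup>2 = 1" by simp
      then show ?thesis using cosne[OF x] by (simp add: tan_def field_simps power2_eq_square)
    qed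
    ultimately show ?thesis by (simp add: \<phi>_def power2_eq_square algebra_simps)
  qed
  have cphi: "continuous_on {0..1} \<phi>" by (rule cont_from_deriv01[OF dphi])
  define h' where "h' x = (-c\<^sup>2 - (\<phi> x)\<^sup>2) * (f x)\<^sup>2 + \<phi> x * (2 * f x * f' x)" for x
  have "(h' has_integral (\<phi> 1 * (f 1)\<^sup>2 - \<phi> 0 * (f 0)\<^sup>2)) {0..1}"
  proof (rule fundamental_theorem_of_calculus[where f="\<lambda>x. \<phi> x * (f x)\<^sup>2"])
    fix x :: real assume x: "x \<in> {0..1}"
    have d3: "((\<lambda>x. (f x)\<^sup>2) has_real_derivative 2 * f x * f' x) (at x within {0..1})"
      using DERIV_mult[OF df[OF x] df[OF x]] by (simp add: power2_eq_square algebra_simps)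
    from DERIV_mult[OF dphi[OF x] d3]
    have "((\<lambda>x. \<phi> x * (f x)\<^sup>2) has_real_derivative h' x) (at x within {0..1})"
      by (simp add: h'_def algebra_simps)
    then show "((\<lambda>x. \<phi> x * (f x)\<^sup>2) has_vector_derivative h' x) (at x within {0..1})"
      by (simp add: has_real_derivative_iff_has_vector_derivative)
  qed simp
  then have ih: "integral {0..1} h' = 0" using f0 f1 by (simp add: integral_unique)
  have ident: "(f' x)\<^sup>2 - c\<^sup>2 * (f x)\<^sup>2 = (f' x - \<phi> x * f x)\<^sup>2 + h' x" for x
    by (simp add: h'_def power2_eq_square algebra_simps)
  have ch': "continuous_on {0..1} h'" unfolding h'_def[abs_def]
    using cf cf' cphi by (intro continuous_intros)
  have "integral {0..1} (\<lambda>x. (f' x)\<^sup>2 - c\<^sup>2 * (f x)\<^sup>2) = integral {0..1} (\<lambda>x. (f' x - \<phi> x * f x)\<^sup>2 + h' x)"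
    by (simp add: ident)
  also have "\<dots> = integral {0..1} (\<lambda>x. (f' x - \<phi> x * f x)\<^sup>2) + integral {0..1} h'"
    by (rule integral_add) (auto intro!: integrable_continuous_real continuous_intros cf cf' cphi ch')
  also have "\<dots> \<ge> 0" using ih
    by (simp add: integral_nonneg integrable_continuous_real continuous_intros cf cf' cphi)
  finally have "0 \<le> integral {0..1} (\<lambda>x. (f' x)\<^sup>2 - c\<^sup>2 * (f x)\<^sup>2)" .
  moreover have "integral {0..1} (\<lambda>x. (f' x)\<^sup>2 - c\<^sup>2 * (f x)\<^sup>2) = integral {0..1} (\<lambda>x. (f' x)\<^sup>2) - c\<^sup>2 * integral {0..1} (\<lambda>x. (f x)\<^sup>2)"
    by (subst integral_diff) (auto intro!: integrable_continuous_real continuous_intros cf cf')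
  ultimately show ?thesis by linarith
qed

lemma sup_bound01:
  fixes f f' :: "real \<Rightarrow> real"
  assumes df: "\<And>x. x \<in> {0..1} \<Longrightarrow> (f has_real_derivative f' x) (at x within {0..1})"
    and cf': "continuous_on {0..1} f'" and f0: "f 0 = 0" and x: "x \<in> {0..1}"
  shows "(f x)\<^sup>2 \<le> integral {0..1} (\<lambda>y. (f y)\<^sup>2 + (f' y)\<^sup>2)"
proof -
  have cf: "continuous_on {0..1} f" by (rule cont_from_deriv01[OF df])
  have "((\<lambda>y. 2 * f y * f' y) has_integral ((f x)\<^sup>2 - (f 0)\<^sup>2)) {0..x}"
  proof (rule fundamental_theorem_of_calculus[where f="\<lambda>y. (f y)\<^sup>2"])
    fix y :: real assume y: "y \<in> {0..x}"
    then have y1: "y \<in> {0..1}" using x by auto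
    have "((\<lambda>x. (f x)\<^sup>2) has_real_derivative 2 * f y * f' y) (at y within {0..1})"
      using DERIV_mult[OF df[OF y1] df[OF y1]] by (simp add: power2_eq_square algebra_simps)
    then have "((\<lambda>x. (f x)\<^sup>2) has_real_derivative 2 * f y * f' y) (at y within {0..x})"
      by (rule DERIV_subset) (use x in auto)
    then show "((\<lambda>y. (f y)\<^sup>2) has_vector_derivative 2 * f y * f' y) (at y within {0..x})"
      by (simp add: has_real_derivative_iff_has_vector_derivative)
  qed (use x in auto)
  then have "(f x)\<^sup>2 = integral {0..x} (\<lambda>y. 2 * f y * f' y)" using f0 by (simp add: integral_unique)
  also have "\<dots> \<le> integral {0..x} (\<lambda>y. (f y)\<^sup>2 + (f' y)\<^sup>2)"
  proof (rule integral_le)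
    have c01: "continuous_on {0..x} f" "continuous_on {0..x} f'"
      using cf cf' x by (auto intro: continuous_on_subset)
    show "(\<lambda>y. 2 * f y * f' y) integrable_on {0..x}" "(\<lambda>y. (f y)\<^sup>2 + (f' y)\<^sup>2) integrable_on {0..x}"
      using c01 by (auto intro!: integrable_continuous_real continuous_intros)
    show "2 * f y * f' y \<le> (f y)\<^sup>2 + (f' y)\<^sup>2" for y
      using sum_squares_bound[of "f y" "f' y"] by simp
  qed
  also have "\<dots> \<le> integral {0..1} (\<lambda>y. (f y)\<^sup>2 + (f' y)\<^sup>2)"
  proof (rule integral_subset_le)
    have c01: "continuous_on {0..x} f" "continuous_on {0..x} f'"
      using cf cf' x by (auto intro: continuous_on_subset)
    show "(\<lambda>y. (f y)\<^sup>2 + (f' y)\<^sup>2) integrable_on {0..x}"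
      using c01 by (auto intro!: integrable_continuous_real continuous_intros)
    show "(\<lambda>y. (f y)\<^sup>2 + (f' y)\<^sup>2) integrable_on {0..1}"
      using cf cf' by (auto intro!: integrable_continuous_real continuous_intros)
  qed (use x in auto)
  finally show ?thesis .
qed



definition prim :: "(real \<Rightarrow> real) \<Rightarrow> real \<Rightarrow> real" where
  "prim F s = (LBINT y=0..s. F y)"

lemma prim_deriv:
  assumes cF: "continuous_on UNIV F"
  shows "(prim F has_real_derivative F s) (at s)"
proof -
  have "(at s within {min 0 (s - 1)..max 0 (s + 1)}) = at s"
    by (intro at_within_interior) auto
  moreover have "min 0 (s - 1) \<le> s" "s \<le> max 0 (s + 1)"
    by auto
  moreover have "continuous_on {min 0 (s - 1)..max 0 (s + 1)} F"
    using cF by (rule continuous_on_subset) auto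
  ultimately show ?thesis
    using interval_integral_FTC2[of "min 0 (s - 1)" 0 "max 0 (s + 1)" F s]
    by (auto simp: prim_def[abs_def] zero_ereal_def has_real_derivative_iff_has_vector_derivative
             split del: if_split)
qed

lemma prim_0: "prim F 0 = 0"
  unfolding prim_def zero_ereal_def by simp


lemma mvt0:
  fixes f f' :: "real \<Rightarrow> real"
  assumes d: "\<And>x. (f has_real_derivative f' x) (at x)"
  shows "\<exists>z. \<bar>z\<bar> \<le> \<bar>s\<bar> \<and> (s \<ge> 0 \<longrightarrow> 0 \<le> z) \<and> (s \<le> 0 \<longrightarrow> z \<le> 0) \<and> f s - f 0 = s * f' z"
proof (cases "s = 0")
  case True then show ?thesis by (intro exI[of _ 0]) simp
next
  case False
  show ?thesis
  proof (cases "s > 0")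
    case True
    from MVT2[of 0 s f f'] True d obtain z where "0 < z" "z < s" "f s - f 0 = (s - 0) * f' z" by auto
    then show ?thesis by (intro exI[of _ z]) auto
  next
    case False
    with \<open>s \<noteq> 0\<close> have "s < 0" by simp
    from MVT2[of s 0 f f'] this d obtain z where "s < z" "z < 0" "f 0 - f s = (0 - s) * f' z" by auto
    then show ?thesis using \<open>s < 0\<close> by (intro exI[of _ z]) (auto simp: algebra_simps)
  qed
qed

locale Fhyp =
  fixes F F' :: "real \<Rightarrow> real" and K :: real
  assumes dF: "\<And>s. (F has_real_derivative F' s) (at s)"
    and cF': "continuous_on UNIV F'"
    and F0: "F 0 = 0"
    and FK: "\<And>s. F' s \<le> K"
begin

lemma cF: "continuous_on UNIV F"
  using dF by (intro continuous_at_imp_continuous_on) (auto intro: DERIV_isCont)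

lemma F_pos: "s \<ge> 0 \<Longrightarrow> F s \<le> K * s"
proof -
  assume s: "s \<ge> 0"
  from mvt0[OF dF, of s] obtain z where "F s - F 0 = s * F' z" by auto
  moreover have "s * F' z \<le> s * K" using FK[of z] s by (intro mult_left_mono) auto
  ultimately show ?thesis using F0 by (simp add: mult.commute)
qed

lemma F_neg: "s \<le> 0 \<Longrightarrow> F s \<ge> K * s"
proof -
  assume s: "s \<le> 0"
  from mvt0[OF dF, of s] obtain z where "F s - F 0 = s * F' z" by auto
  moreover have "s * K \<le> s * F' z" using FK[of z] s by (intro mult_left_mono_neg) auto
  ultimately show ?thesis using F0 by (simp add: mult.commute)
qed

lemma sF_le: "s * F s \<le> K * s\<^sup>2"
proof (cases "s \<ge> 0")
  case True
  then have "s * F s \<le> s * (K * s)" using F_pos by (intro mult_left_mono) auto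
  then show ?thesis by (simp add: power2_eq_square algebra_simps)
next
  case False
  then have "s * (K * s) \<ge> s * F s" using F_neg[of s] by (intro mult_left_mono_neg) auto
  then show ?thesis by (simp add: power2_eq_square algebra_simps)
qed

lemma dG: "(prim F has_real_derivative F s) (at s)"
  by (rule prim_deriv[OF cF])

lemma G_le: "prim F s \<le> K * s\<^sup>2 / 2"
proof -
  define h where "h s = K * s\<^sup>2 / 2 - prim F s" for s
  have dh: "(h has_real_derivative K * x - F x) (at x)" for x
    unfolding h_def[abs_def] by (rule derivative_eq_intros dG refl | simp)+
  have h0: "h 0 = 0" by (simp add: h_def prim_0)
  have "h s \<ge> 0"
  proof (cases "s \<ge> 0")
    case True
    have "h 0 \<le> h s"
    proof (rule DERIV_nonneg_imp_nondecreasing[OF True])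
      fix x assume "0 \<le> x" "x \<le> s"
      then show "\<exists>y. (h has_real_derivative y) (at x) \<and> 0 \<le> y"
        using dh[of x] F_pos[of x] by (intro exI[of _ "K * x - F x"]) auto
    qed
    then show ?thesis using h0 by simp
  next
    case False
    have "h s \<ge> h 0"
    proof (rule DERIV_nonpos_imp_nonincreasing[of s 0 h])
      show "s \<le> 0" using False by simp
      fix x assume "s \<le> x" "x \<le> 0"
      then show "\<exists>y. (h has_real_derivative y) (at x) \<and> y \<le> 0"
        using dh[of x] F_neg[of x] by (intro exI[of _ "K * x - F x"]) auto
    qed
    then show ?thesis using h0 by simp
  qed
  then show ?thesis by (simp add: h_def)
qed

lemma F_abs_le:
  assumes M: "\<And>z. \<bar>z\<bar> \<le> r \<Longrightarrow> \<bar>F' z\<bar> \<le> M" and s: "\<bar>s\<bar> \<le> r"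
  shows "\<bar>F s\<bar> \<le> M * \<bar>s\<bar>"
proof -
  from mvt0[OF dF, of s] obtain z where z: "\<bar>z\<bar> \<le> \<bar>s\<bar>" "F s - F 0 = s * F' z" by auto
  then have "\<bar>F s\<bar> = \<bar>s\<bar> * \<bar>F' z\<bar>" using F0 by (simp add: abs_mult)
  also have "\<dots> \<le> \<bar>s\<bar> * M" using M[of z] z s by (intro mult_left_mono) auto
  finally show ?thesis by (simp add: mult.commute)
qed

lemma G_abs_le:
  assumes M: "\<And>z. \<bar>z\<bar> \<le> r \<Longrightarrow> \<bar>F' z\<bar> \<le> M" and s: "\<bar>s\<bar> \<le> r"
  shows "\<bar>prim F s\<bar> \<le> M * s\<^sup>2"
proof -
  have r0: "0 \<le> r" using s abs_ge_zero[of s] by linarith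
  have M0: "0 \<le> M" using M[of 0] r0 by auto
  from mvt0[OF dG, of s] obtain z where z: "\<bar>z\<bar> \<le> \<bar>s\<bar>" "prim F s - prim F 0 = s * F z" by auto
  then have "\<bar>prim F s\<bar> = \<bar>s\<bar> * \<bar>F z\<bar>" by (simp add: abs_mult prim_0)
  also have "\<dots> \<le> \<bar>s\<bar> * (M * \<bar>s\<bar>)"
  proof (rule mult_left_mono)
    have "\<bar>F z\<bar> \<le> M * \<bar>z\<bar>" using F_abs_le[OF M] z s by auto
    also have "\<dots> \<le> M * \<bar>s\<bar>" using z M0 by (intro mult_left_mono) auto
    finally show "\<bar>F z\<bar> \<le> M * \<bar>s\<bar>" .
  qed simp
  finally show ?thesis by (simp add: power2_eq_square algebra_simps)
qed

lemma F'_bound: "\<exists>M\<ge>0. \<forall>z. \<bar>z\<bar> \<le> r \<longrightarrow> \<bar>F' z\<bar> \<le> M"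
proof -
  have "compact (F' ` {-r..r})"
    by (rule compact_continuous_image) (use cF' in \<open>auto intro: continuous_on_subset\<close>)
  then have "bounded (F' ` {-r..r})" by (rule compact_imp_bounded)
  then obtain M where M: "\<forall>y\<in>F' ` {-r..r}. \<bar>y\<bar> \<le> M" unfolding bounded_real by blast
  show ?thesis
  proof (rule exI[of _ "max M 0"], intro conjI allI impI)
    fix z assume "\<bar>z\<bar> \<le> r"
    then have "z \<in> {-r..r}" by (auto simp: abs_le_iff)
    then have "\<bar>F' z\<bar> \<le> M" using M by blast
    then show "\<bar>F' z\<bar> \<le> max M 0" by simp
  qed simp
qed

end



lemma gron1:
  fixes y y' :: "real \<Rightarrow> real"
  assumes cont: "continuous_on {t0..} y"
    and d: "\<And>t. t > t0 \<Longrightarrow> (y has_real_derivative y' t) (at t)"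
    and le: "\<And>t. t > t0 \<Longrightarrow> y' t \<le> - \<gamma> * y t"
    and t: "t \<ge> t0"
  shows "y t \<le> exp (- \<gamma> * (t - t0)) * y t0"
proof -
  define z where "z s = exp (\<gamma> * (s - t0)) * y s" for s
  have "z t \<le> z t0"
  proof (rule DERIV_nonpos_imp_decreasing_open[OF t])
    fix x assume x: "t0 < x" "x < t"
    have "(z has_real_derivative exp (\<gamma> * (x - t0)) * \<gamma> * y x + exp (\<gamma> * (x - t0)) * y' x) (at x)"
      unfolding z_def[abs_def] using d[of x] x
      by (intro derivative_eq_intros refl | simp)+
    moreover have "exp (\<gamma> * (x - t0)) * \<gamma> * y x + exp (\<gamma> * (x - t0)) * y' x \<le> 0"
    proof -
      have "exp (\<gamma> * (x - t0)) * (\<gamma> * y x + y' x) \<le> 0"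
        using le[of x] x by (intro mult_nonneg_nonpos) auto
      then show ?thesis by (simp add: algebra_simps)
    qed
    ultimately show "\<exists>y. (z has_real_derivative y) (at x) \<and> y \<le> 0" by blast
  next
    show "continuous_on {t0..t} z" unfolding z_def[abs_def]
      using cont by (auto intro!: continuous_intros intro: continuous_on_subset)
  qed
  then have "exp (\<gamma> * (t - t0)) * y t \<le> y t0" by (simp add: z_def)
  then have "exp (- \<gamma> * (t - t0)) * (exp (\<gamma> * (t - t0)) * y t) \<le> exp (- \<gamma> * (t - t0)) * y t0"
    by (intro mult_left_mono) auto
  moreover have e1: "exp (- \<gamma> * (t - t0)) * exp (\<gamma> * (t - t0)) = 1"
    by (simp add: exp_add[symmetric])
  ultimately show ?thesis by (metis mult.assoc mult_1)
qed

lemma gron2: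
  fixes W W' :: "real \<Rightarrow> real"
  assumes cont: "continuous_on {t0..} W"
    and d: "\<And>t. t > t0 \<Longrightarrow> (W has_real_derivative W' t) (at t)"
    and le: "\<And>t. t > t0 \<Longrightarrow> W' t \<le> - W t / \<epsilon> + Cw * exp (- \<gamma> * (t - t0))"
    and W0: "\<And>t. t \<ge> t0 \<Longrightarrow> W t \<ge> 0"
    and \<beta>: "\<beta> \<le> 1 / \<epsilon>" "\<beta> < \<gamma>" and Cw: "Cw \<ge> 0"
    and t: "t \<ge> t0"
  shows "exp (\<beta> * (t - t0)) * W t \<le> W t0 + Cw / (\<gamma> - \<beta>)"
proof -
  define z where "z s = exp (\<beta> * (s - t0)) * W s + Cw / (\<gamma> - \<beta>) * exp (- (\<gamma> - \<beta>) * (s - t0))" for s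
  have "z t \<le> z t0"
  proof (rule DERIV_nonpos_imp_decreasing_open[OF t])
    fix x assume x: "t0 < x" "x < t"
    have "(z has_real_derivative exp (\<beta> * (x - t0)) * \<beta> * W x + exp (\<beta> * (x - t0)) * W' x
          + Cw / (\<gamma> - \<beta>) * (exp (- (\<gamma> - \<beta>) * (x - t0)) * (- (\<gamma> - \<beta>)))) (at x)"
      unfolding z_def[abs_def] using d[of x] x
      by (intro derivative_eq_intros refl | simp)+
    moreover have "exp (\<beta> * (x - t0)) * \<beta> * W x + exp (\<beta> * (x - t0)) * W' x
          + Cw / (\<gamma> - \<beta>) * (exp (- (\<gamma> - \<beta>) * (x - t0)) * (- (\<gamma> - \<beta>))) \<le> 0"
    proof -
      have e: "exp (\<beta> * (x - t0)) * exp (- \<gamma> * (x - t0)) = exp (- (\<gamma> - \<beta>) * (x - t0))"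
        by (simp add: exp_add[symmetric] algebra_simps)
      have g: "Cw / (\<gamma> - \<beta>) * (exp (- (\<gamma> - \<beta>) * (x - t0)) * (- (\<gamma> - \<beta>))) = - Cw * exp (- (\<gamma> - \<beta>) * (x - t0))"
        using \<beta> by (simp add: field_simps)
      have "exp (\<beta> * (x - t0)) * W' x \<le> exp (\<beta> * (x - t0)) * (- W x / \<epsilon> + Cw * exp (- \<gamma> * (x - t0)))"
        using le[of x] x by (intro mult_left_mono) auto
      also have "\<dots> = exp (\<beta> * (x - t0)) * (- W x / \<epsilon>) + Cw * exp (- (\<gamma> - \<beta>) * (x - t0))"
        using e by (simp add: algebra_simps)
      finally have 1: "exp (\<beta> * (x - t0)) * W' x \<le> exp (\<beta> * (x - t0)) * (- W x / \<epsilon>) + Cw * exp (- (\<gamma> - \<beta>) * (x - t0))" .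
      have "\<beta> * W x \<le> W x / \<epsilon>" using \<beta>(1) W0[of x] x mult_right_mono[of \<beta> "1/\<epsilon>" "W x"] by simp
      then have 2: "exp (\<beta> * (x - t0)) * (\<beta> * W x) \<le> exp (\<beta> * (x - t0)) * (W x / \<epsilon>)"
        by (intro mult_left_mono) auto
      show ?thesis using 1 2 g by (simp add: algebra_simps)
    qed
    ultimately show "\<exists>y. (z has_real_derivative y) (at x) \<and> y \<le> 0" by blast
  next
    show "continuous_on {t0..t} z" unfolding z_def[abs_def]
      using cont \<beta> by (auto intro!: continuous_intros intro: continuous_on_subset)
  qed
  moreover have "exp (\<beta> * (t - t0)) * W t \<le> z t"
  proof -
    have "Cw / (\<gamma> - \<beta>) * exp (- (\<gamma> - \<beta>) * (t - t0)) \<ge> 0" using \<beta> Cw by auto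
    then show ?thesis by (simp add: z_def)
  qed
  ultimately show ?thesis by (simp add: z_def)
qed



definition odehyp where
"odehyp \<mu> \<epsilon> K a0 A Mb t0 P Q R S T W Eg Huv DV UD UF WZ \<longleftrightarrow>
 (\<forall>t\<ge>t0. 0 \<le> P t \<and> 0 \<le> R t \<and> 0 \<le> W t \<and> 0 \<le> T t \<and> \<mu> * P t \<le> Q t \<and> \<mu> * R t \<le> S t \<and>
   Eg t \<le> K * P t / 2 \<and> (\<forall>r\<ge>0. P t + Q t \<le> r\<^sup>2 \<longrightarrow> \<bar>Eg t\<bar> \<le> Mb r * P t) \<and>
   \<bar>Huv t\<bar> \<le> (P t + R t) / 2 \<and> UF t \<le> K * P t \<and>
   T t \<le> 2 * (W t + R t) / \<epsilon>\<^sup>2 \<and> W t \<le> 2 * \<epsilon>\<^sup>2 * T t + 2 * R t) \<and>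
 (\<forall>t>t0. a0 * R t \<le> DV t \<and>
   (\<forall>\<eta>>0. \<bar>UD t\<bar> \<le> A (sqrt (P t + Q t + R t)) * (\<eta> * P t / 2 + R t / (2 * \<eta>))) \<and>
   (\<forall>r\<ge>0. P t + Q t \<le> r\<^sup>2 \<longrightarrow> 2 * WZ t \<le> W t / \<epsilon> + 3 * \<epsilon> * ((A (sqrt (P t + Q t + R t)))\<^sup>2 * R t + R t / \<epsilon>\<^sup>2 + (Mb r)\<^sup>2 * P t)) \<and>
   ((\<lambda>t. R t / 2 + Q t / 2 - Eg t) has_real_derivative (- \<epsilon> * S t - DV t)) (at t) \<and>
         ((\<lambda>t. Huv t + \<epsilon> / 2 * Q t) has_real_derivative (R t - Q t + UF t - UD t)) (at t) \<and>
         (W has_real_derivative (- 2 * W t / \<epsilon> + 2 * WZ t)) (at t)) \<and>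
 continuous_on {t0..} (\<lambda>t. R t / 2 + Q t / 2 - Eg t) \<and>
 continuous_on {t0..} (\<lambda>t. Huv t + \<epsilon> / 2 * Q t) \<and> continuous_on {t0..} W"

lemma ode_pos:
  fixes \<mu> \<epsilon> K a0 \<alpha> :: real and A Mb :: "real \<Rightarrow> real"
  assumes par: "0 < \<epsilon>" "0 < \<mu>" "0 < K" "K < \<mu>" "0 < \<epsilon> * \<mu> + a0"
    and A_mono: "mono_on {0..} A" and A_nn: "\<And>r. r \<ge> 0 \<Longrightarrow> A r \<ge> 0"
    and Mb_nn: "\<And>r. Mb r \<ge> 0" and \<alpha>: "0 < \<alpha>"
  assumes kappa_def: "\<kappa> = \<epsilon> + min a0 0 / \<mu>"
    and rho_def: "\<rho> = (1 - K / \<mu>) / 2"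
    and E0b_def: "E0b = (1/2 + Mb \<alpha>) * \<alpha>\<^sup>2"
    and B_def: "B = sqrt ((1 + 1 / \<mu>) * E0b / \<rho>)"
    and M_def: "M = Mb (max \<alpha> B)"
    and As_def: "As = A B"
    and eta_def: "\<eta> = (\<mu> - K) / (As + 1)"
    and c1_def: "c1 = (\<mu> - K) / (2 * \<mu>)"
    and c2_def: "c2 = 1 + As / (2 * \<eta>)"
    and c3_def: "c3 = (1 / \<mu> + \<epsilon> + 1) / 2"
    and c4_def: "c4 = 1/2 + M / \<mu>"
    and delta_def: "\<delta> = min (\<rho> / (2 * c3)) (\<kappa> * \<mu> / (2 * c2))"
    and c5_def: "c5 = c4 + \<rho> / 2"
    and c6_def: "c6 = min (\<kappa> * \<mu> / 2) (\<delta> * c1)"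
    and gamma_def: "\<gamma> = c6 / c5"
    and c7_def: "c7 = 3 * \<epsilon> * (As\<^sup>2 + 1 / \<epsilon>\<^sup>2) + 3 * \<epsilon> * M\<^sup>2 / \<mu>"
    and c8_def: "c8 = c7 * (2 * c5 / \<rho>)"
    and beta_def: "\<beta> = min (1 / \<epsilon>) \<gamma> / 2"
    and Ctot_def: "Ctot = (1 + 1 / \<mu> + 2 / \<epsilon>\<^sup>2) * (2 * c5 / \<rho>) + (2 / \<epsilon>\<^sup>2) * (2 * \<epsilon>\<^sup>2 + 2 + c8 / (\<gamma> - \<beta>))"
  shows "0 < \<beta> \<and> 0 \<le> Ctot"
proof -
  have mu: "0 < \<mu>" using par by simp
  have kap: "0 < \<kappa>"
  proof (cases "a0 \<ge> 0")
    case True then show ?thesis using par by (simp add: kappa_def)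
  next
    case False
    then have "\<kappa> = (\<epsilon> * \<mu> + a0) / \<mu>" using mu by (simp add: kappa_def field_simps)
    then show ?thesis using par mu by simp
  qed
  have rho: "0 < \<rho>" "\<rho> \<le> 1/2"
  proof -
    have "K / \<mu> < 1" "0 < K / \<mu>" using par by auto
    then show "0 < \<rho>" "\<rho> \<le> 1/2" using par mu by (auto simp: rho_def)
  qed
  have Mba: "0 \<le> Mb \<alpha>" by (rule Mb_nn)
  have E0b0: "0 \<le> E0b" using Mba by (simp add: E0b_def)
  have B0: "0 \<le> B" using E0b0 rho mu by (simp add: B_def)
  have As0: "0 \<le> As" using A_nn[OF B0] by (simp add: As_def)
  have M0: "0 \<le> M" by (simp add: M_def Mb_nn)
  have eta: "0 < \<eta>" using par As0 by (simp add: eta_def)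
  have c1: "0 < c1" using par by (simp add: c1_def)
  have c2: "1 \<le> c2" using As0 eta by (simp add: c2_def)
  have c3: "0 < c3" using par by (simp add: c3_def add_pos_pos)
  have c4: "1/2 \<le> c4" using M0 mu by (simp add: c4_def)
  have delta: "0 < \<delta>" using rho c3 kap mu c2 by (simp add: delta_def)
  have dc3: "\<delta> * c3 \<le> \<rho> / 2"
  proof -
    have "\<delta> \<le> \<rho> / (2 * c3)" by (simp add: delta_def)
    then have "\<delta> * c3 \<le> \<rho> / (2 * c3) * c3" using c3 by (intro mult_right_mono) auto
    then show ?thesis using c3 by simp
  qed
  have dc2: "\<delta> * c2 \<le> \<kappa> * \<mu> / 2"
  proof -
    have "\<delta> \<le> \<kappa> * \<mu> / (2 * c2)" by (simp add: delta_def)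
    then have "\<delta> * c2 \<le> \<kappa> * \<mu> / (2 * c2) * c2" using c2 by (intro mult_right_mono) auto
    then show ?thesis using c2 by simp
  qed
  have c5: "0 < c5" using c4 rho by (simp add: c5_def)
  have c6: "0 < c6" "c6 \<le> \<kappa> * \<mu> / 2" "c6 \<le> \<delta> * c1" using kap mu delta c1 by (auto simp: c6_def)
  have gam: "0 < \<gamma>" using c5 c6 by (simp add: gamma_def)
  have c7: "0 \<le> c7" using par M0 by (simp add: c7_def)
  have c8: "0 \<le> c8" using c7 c5 rho by (simp add: c8_def)
  have beta: "0 < \<beta>" "\<beta> \<le> 1 / \<epsilon>" "\<beta> < \<gamma>" "\<beta> \<le> \<gamma>"
  proof -
    have "0 < 1 / \<epsilon>" "1 / \<epsilon> \<le> 2 / \<epsilon>" using par by (auto simp: divide_right_mono)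
    then show "0 < \<beta>" "\<beta> \<le> 1 / \<epsilon>" "\<beta> < \<gamma>" "\<beta> \<le> \<gamma>" using gam unfolding beta_def min_def by auto
  qed
  have Ct0: "0 \<le> Ctot"
  proof -
    have "0 \<le> c8 / (\<gamma> - \<beta>)" using c8 beta by simp
    then show ?thesis using mu c5 rho par by (simp add: Ctot_def)
  qed
  then show ?thesis using beta by simp
qed

lemma ode_core:
  fixes \<mu> \<epsilon> K a0 \<alpha> :: real and A Mb :: "real \<Rightarrow> real"
  assumes par: "0 < \<epsilon>" "0 < \<mu>" "0 < K" "K < \<mu>" "0 < \<epsilon> * \<mu> + a0"
    and A_mono: "mono_on {0..} A" and A_nn: "\<And>r. r \<ge> 0 \<Longrightarrow> A r \<ge> 0"
    and Mb_nn: "\<And>r. Mb r \<ge> 0" and \<alpha>: "0 < \<alpha>"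
    and hyp: "odehyp \<mu> \<epsilon> K a0 A Mb t0 P Q R S T W Eg Huv DV UD UF WZ"
    and d0: "sqrt (P t0 + Q t0 + R t0 + T t0) \<le> \<alpha>"
    and t: "t \<ge> t0"
  assumes kappa_def: "\<kappa> = \<epsilon> + min a0 0 / \<mu>"
    and rho_def: "\<rho> = (1 - K / \<mu>) / 2"
    and E0b_def: "E0b = (1/2 + Mb \<alpha>) * \<alpha>\<^sup>2"
    and B_def: "B = sqrt ((1 + 1 / \<mu>) * E0b / \<rho>)"
    and M_def: "M = Mb (max \<alpha> B)"
    and As_def: "As = A B"
    and eta_def: "\<eta> = (\<mu> - K) / (As + 1)"
    and c1_def: "c1 = (\<mu> - K) / (2 * \<mu>)"
    and c2_def: "c2 = 1 + As / (2 * \<eta>)"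
    and c3_def: "c3 = (1 / \<mu> + \<epsilon> + 1) / 2"
    and c4_def: "c4 = 1/2 + M / \<mu>"
    and delta_def: "\<delta> = min (\<rho> / (2 * c3)) (\<kappa> * \<mu> / (2 * c2))"
    and c5_def: "c5 = c4 + \<rho> / 2"
    and c6_def: "c6 = min (\<kappa> * \<mu> / 2) (\<delta> * c1)"
    and gamma_def: "\<gamma> = c6 / c5"
    and c7_def: "c7 = 3 * \<epsilon> * (As\<^sup>2 + 1 / \<epsilon>\<^sup>2) + 3 * \<epsilon> * M\<^sup>2 / \<mu>"
    and c8_def: "c8 = c7 * (2 * c5 / \<rho>)"
    and beta_def: "\<beta> = min (1 / \<epsilon>) \<gamma> / 2"
    and Ctot_def: "Ctot = (1 + 1 / \<mu> + 2 / \<epsilon>\<^sup>2) * (2 * c5 / \<rho>) + (2 / \<epsilon>\<^sup>2) * (2 * \<epsilon>\<^sup>2 + 2 + c8 / (\<gamma> - \<beta>))"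
  shows "sqrt (P t + Q t + R t + T t) \<le> sqrt Ctot * exp (- (\<beta> / 2) * (t - t0)) * sqrt (P t0 + Q t0 + R t0 + T t0)"
proof -
  note H = hyp[unfolded odehyp_def]
  have st: "\<And>t. t \<ge> t0 \<Longrightarrow> 0 \<le> P t \<and> 0 \<le> R t \<and> 0 \<le> W t \<and> 0 \<le> T t \<and> \<mu> * P t \<le> Q t \<and> \<mu> * R t \<le> S t \<and>
   Eg t \<le> K * P t / 2 \<and> (\<forall>r\<ge>0. P t + Q t \<le> r\<^sup>2 \<longrightarrow> \<bar>Eg t\<bar> \<le> Mb r * P t) \<and>
   \<bar>Huv t\<bar> \<le> (P t + R t) / 2 \<and> UF t \<le> K * P t \<and>
   T t \<le> 2 * (W t + R t) / \<epsilon>\<^sup>2 \<and> W t \<le> 2 * \<epsilon>\<^sup>2 * T t + 2 * R t"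
    using H by blast
  have dv: "\<And>t. t > t0 \<Longrightarrow> a0 * R t \<le> DV t \<and>
   (\<forall>\<eta>>0. \<bar>UD t\<bar> \<le> A (sqrt (P t + Q t + R t)) * (\<eta> * P t / 2 + R t / (2 * \<eta>))) \<and>
   (\<forall>r\<ge>0. P t + Q t \<le> r\<^sup>2 \<longrightarrow> 2 * WZ t \<le> W t / \<epsilon> + 3 * \<epsilon> * ((A (sqrt (P t + Q t + R t)))\<^sup>2 * R t + R t / \<epsilon>\<^sup>2 + (Mb r)\<^sup>2 * P t)) \<and>
   ((\<lambda>t. R t / 2 + Q t / 2 - Eg t) has_real_derivative (- \<epsilon> * S t - DV t)) (at t) \<and>
         ((\<lambda>t. Huv t + \<epsilon> / 2 * Q t) has_real_derivative (R t - Q t + UF t - UD t)) (at t) \<and>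
         (W has_real_derivative (- 2 * W t / \<epsilon> + 2 * WZ t)) (at t)"
    using H by blast
  have ct: "continuous_on {t0..} (\<lambda>t. R t / 2 + Q t / 2 - Eg t)"
     "continuous_on {t0..} (\<lambda>t. Huv t + \<epsilon> / 2 * Q t)" "continuous_on {t0..} W"
    using H by blast+
  define E where "E t = R t / 2 + Q t / 2 - Eg t" for t
  define Hf where "Hf t = Huv t + \<epsilon> / 2 * Q t" for t
  define X where "X t = Q t + R t" for t
  have P0: "\<And>t. t \<ge> t0 \<Longrightarrow> 0 \<le> P t" and R0: "\<And>t. t \<ge> t0 \<Longrightarrow> 0 \<le> R t"
    and Q0: "\<And>t. t \<ge> t0 \<Longrightarrow> 0 \<le> Q t" and S0: "\<And>t. t \<ge> t0 \<Longrightarrow> 0 \<le> S t"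
    and PQ: "\<And>t. t \<ge> t0 \<Longrightarrow> P t \<le> Q t / \<mu>" and RS: "\<And>t. t \<ge> t0 \<Longrightarrow> R t \<le> S t / \<mu>"
  proof -
    fix t assume "t \<ge> t0"
    note s = st[OF this]
    show "0 \<le> P t" "0 \<le> R t" using s by auto
    show "0 \<le> Q t" using s par mult_nonneg_nonneg[of \<mu> "P t"] by linarith
    show "0 \<le> S t" using s par mult_nonneg_nonneg[of \<mu> "R t"] by linarith
    show "P t \<le> Q t / \<mu>" using s par by (simp add: field_simps mult.commute)
    show "R t \<le> S t / \<mu>" using s par by (simp add: field_simps mult.commute)
  qed
  have mu: "0 < \<mu>" using par by simp
  have kap: "0 < \<kappa>"
  proof (cases "a0 \<ge> 0")
    case True then show ?thesis using par by (simp add: kappa_def)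
  next
    case False
    then have "\<kappa> = (\<epsilon> * \<mu> + a0) / \<mu>" using mu by (simp add: kappa_def field_simps)
    then show ?thesis using par mu by simp
  qed
  have rho: "0 < \<rho>" "\<rho> \<le> 1/2"
  proof -
    have "K / \<mu> < 1" "0 < K / \<mu>" using par by auto
    then show "0 < \<rho>" "\<rho> \<le> 1/2" using par mu by (auto simp: rho_def)
  qed
  have Mba: "0 \<le> Mb \<alpha>" by (rule Mb_nn)
  have E0b0: "0 \<le> E0b" using Mba by (simp add: E0b_def)
  have B0: "0 \<le> B" using E0b0 rho mu by (simp add: B_def)
  have As0: "0 \<le> As" using A_nn[OF B0] by (simp add: As_def)
  have M0: "0 \<le> M" by (simp add: M_def Mb_nn)
  have eta: "0 < \<eta>" using par As0 by (simp add: eta_def)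
  have c1: "0 < c1" using par by (simp add: c1_def)
  have c2: "1 \<le> c2" using As0 eta by (simp add: c2_def)
  have c3: "0 < c3" using par by (simp add: c3_def add_pos_pos)
  have c4: "1/2 \<le> c4" using M0 mu by (simp add: c4_def)
  have delta: "0 < \<delta>" using rho c3 kap mu c2 by (simp add: delta_def)
  have dc3: "\<delta> * c3 \<le> \<rho> / 2"
  proof -
    have "\<delta> \<le> \<rho> / (2 * c3)" by (simp add: delta_def)
    then have "\<delta> * c3 \<le> \<rho> / (2 * c3) * c3" using c3 by (intro mult_right_mono) auto
    then show ?thesis using c3 by simp
  qed
  have dc2: "\<delta> * c2 \<le> \<kappa> * \<mu> / 2"
  proof -
    have "\<delta> \<le> \<kappa> * \<mu> / (2 * c2)" by (simp add: delta_def)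
    then have "\<delta> * c2 \<le> \<kappa> * \<mu> / (2 * c2) * c2" using c2 by (intro mult_right_mono) auto
    then show ?thesis using c2 by simp
  qed
  have c5: "0 < c5" using c4 rho by (simp add: c5_def)
  have c6: "0 < c6" "c6 \<le> \<kappa> * \<mu> / 2" "c6 \<le> \<delta> * c1" using kap mu delta c1 by (auto simp: c6_def)
  have gam: "0 < \<gamma>" using c5 c6 by (simp add: gamma_def)
  have c7: "0 \<le> c7" using par M0 by (simp add: c7_def)
  have c8: "0 \<le> c8" using c7 c5 rho by (simp add: c8_def)
  have beta: "0 < \<beta>" "\<beta> \<le> 1 / \<epsilon>" "\<beta> < \<gamma>" "\<beta> \<le> \<gamma>"
  proof -
    have "0 < 1 / \<epsilon>" "1 / \<epsilon> \<le> 2 / \<epsilon>" using par by (auto simp: divide_right_mono)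
    then show "0 < \<beta>" "\<beta> \<le> 1 / \<epsilon>" "\<beta> < \<gamma>" "\<beta> \<le> \<gamma>" using gam unfolding beta_def min_def by auto
  qed
  have Ed: "- \<epsilon> * S t' - DV t' \<le> - \<kappa> * S t'" if "t' > t0" for t'
  proof -
    have t': "t' \<ge> t0" using that by simp
    have aR: "a0 * R t' \<le> DV t'" using dv[OF that] by blast
    show ?thesis
    proof (cases "a0 \<ge> 0")
      case True
      then have "0 \<le> a0 * R t'" using R0[OF t'] by simp
      then show ?thesis using aR True by (simp add: kappa_def)
    next
      case False
      have "- a0 * R t' \<le> - a0 * (S t' / \<mu>)" using RS[OF t'] False by (intro mult_left_mono) auto
      then show ?thesis using aR False by (simp add: kappa_def algebra_simps)
    qed
  qed
  have Ele: "E t' \<le> E t0" if t': "t' \<ge> t0" for t'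
  proof (rule DERIV_nonpos_imp_decreasing_open[OF t'])
    fix x assume x: "t0 < x" "x < t'"
    have "(E has_real_derivative (- \<epsilon> * S x - DV x)) (at x)"
      using dv[of x] x unfolding E_def[abs_def] by blast
    moreover have "- \<epsilon> * S x - DV x \<le> 0"
    proof -
      have "0 \<le> S x" using S0[of x] x by auto
      then have "0 \<le> \<kappa> * S x" using kap by simp
      then show ?thesis using Ed[of x] x by linarith
    qed
    ultimately show "\<exists>y. (E has_real_derivative y) (at x) \<and> y \<le> 0" by blast
  next
    show "continuous_on {t0..t'} E" unfolding E_def[abs_def]
      using ct(1) by (rule continuous_on_subset) auto
  qed
  have d0sq: "P t0 + Q t0 + R t0 + T t0 \<le> \<alpha>\<^sup>2"
  proof -
    have nn: "0 \<le> P t0 + Q t0 + R t0 + T t0" using st[of t0] Q0[of t0] by auto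
    have "(sqrt (P t0 + Q t0 + R t0 + T t0))\<^sup>2 \<le> \<alpha>\<^sup>2"
      using d0 nn by (intro power_mono) auto
    then show ?thesis using nn by simp
  qed
  have T00: "0 \<le> T t0" using st[of t0] by auto
  have E0le: "E t0 \<le> E0b"
  proof -
    have PQa: "P t0 + Q t0 \<le> \<alpha>\<^sup>2" using d0sq R0[of t0] T00 by auto
    have "\<bar>Eg t0\<bar> \<le> Mb \<alpha> * P t0" using st[of t0] PQa \<alpha> by auto
    then have "E t0 \<le> R t0 / 2 + Q t0 / 2 + Mb \<alpha> * P t0" by (simp add: E_def)
    also have "\<dots> \<le> (1/2 + Mb \<alpha>) * (P t0 + Q t0 + R t0 + T t0)"
    proof -
      have e: "(1/2 + Mb \<alpha>) * (P t0 + Q t0 + R t0 + T t0) = P t0/2 + Q t0/2 + R t0/2 + T t0/2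
          + Mb \<alpha> * P t0 + Mb \<alpha> * Q t0 + Mb \<alpha> * R t0 + Mb \<alpha> * T t0" by (simp add: algebra_simps)
      have "0 \<le> Mb \<alpha> * Q t0" "0 \<le> Mb \<alpha> * R t0" "0 \<le> Mb \<alpha> * T t0"
        using Mba Q0[of t0] R0[of t0] T00 by auto
      then show ?thesis using e P0[of t0] T00 by linarith
    qed
    also have "\<dots> \<le> (1/2 + Mb \<alpha>) * \<alpha>\<^sup>2" using d0sq Mba by (intro mult_left_mono) auto
    finally show ?thesis by (simp add: E0b_def)
  qed
  have Ege: "\<rho> * X t' \<le> E t'" if t': "t' \<ge> t0" for t'
  proof -
    have "Eg t' \<le> K * P t' / 2" using st[OF t'] by blast
    also have "\<dots> \<le> K * (Q t' / \<mu>) / 2" using PQ[OF t'] par by (intro divide_right_mono mult_left_mono) auto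
    finally have "Eg t' \<le> K / \<mu> * Q t' / 2" by simp
    moreover have "\<rho> * Q t' = Q t' / 2 - K / \<mu> * Q t' / 2" by (simp add: rho_def diff_divide_distrib left_diff_distrib)
    ultimately have "R t' / 2 + \<rho> * Q t' \<le> E t'" unfolding E_def by linarith
    moreover have "\<rho> * R t' \<le> R t' / 2" using rho R0[OF t'] mult_right_mono[of \<rho> "1/2" "R t'"] by simp
    ultimately show ?thesis by (simp add: X_def algebra_simps)
  qed
  have bnd: "P t' + Q t' + R t' \<le> B\<^sup>2" if t': "t' \<ge> t0" for t'
  proof -
    have "\<rho> * X t' \<le> E0b" using Ege[OF t'] Ele[OF t'] E0le by linarith
    then have X: "X t' \<le> E0b / \<rho>" using rho by (simp add: field_simps mult.commute)
    have "P t' + Q t' + R t' \<le> Q t' / \<mu> + X t'" using PQ[OF t'] by (simp add: X_def)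
    also have "\<dots> \<le> (1 + 1 / \<mu>) * X t'" using mu R0[OF t'] by (simp add: X_def field_simps)
    also have "\<dots> \<le> (1 + 1 / \<mu>) * (E0b / \<rho>)" using X mu by (intro mult_left_mono) auto
    also have "\<dots> = B\<^sup>2" using E0b0 rho mu by (simp add: B_def)
    finally show ?thesis .
  qed
  have Abnd: "0 \<le> A (sqrt (P t' + Q t' + R t'))" "A (sqrt (P t' + Q t' + R t')) \<le> As" if t': "t' \<ge> t0" for t'
  proof -
    have nn: "0 \<le> P t' + Q t' + R t'" using P0[OF t'] Q0[OF t'] R0[OF t'] by simp
    have "sqrt (P t' + Q t' + R t') \<le> sqrt (B\<^sup>2)" using bnd[OF t'] by (rule real_sqrt_le_mono)
    then have "sqrt (P t' + Q t' + R t') \<le> B" using B0 by simp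
    then show "A (sqrt (P t' + Q t' + R t')) \<le> As" unfolding As_def
      using nn B0 by (intro mono_onD[OF A_mono]) auto
    show "0 \<le> A (sqrt (P t' + Q t' + R t'))" using nn by (intro A_nn) simp
  qed
  have PQr: "P t' + Q t' \<le> (max \<alpha> B)\<^sup>2" if t': "t' \<ge> t0" for t'
  proof -
    have "B\<^sup>2 \<le> (max \<alpha> B)\<^sup>2" using B0 by (intro power_mono) auto
    then show ?thesis using bnd[OF t'] R0[OF t'] by linarith
  qed
  have r0: "0 \<le> max \<alpha> B" using B0 by simp
  have EgM: "\<bar>Eg t'\<bar> \<le> M * P t'" if t': "t' \<ge> t0" for t'
    using st[OF t'] PQr[OF t'] r0 unfolding M_def by blast
  have Ele4: "E t' \<le> c4 * X t'" if t': "t' \<ge> t0" for t'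
  proof -
    have "E t' \<le> R t' / 2 + Q t' / 2 + M * P t'" using EgM[OF t'] by (simp add: E_def)
    also have "\<dots> \<le> R t' / 2 + Q t' / 2 + M * (Q t' / \<mu>)" using PQ[OF t'] M0 by (intro add_left_mono mult_left_mono) auto
    also have "\<dots> \<le> c4 * X t'"
    proof -
      have "0 \<le> M / \<mu> * R t'" using M0 mu R0[OF t'] by simp
      moreover have "c4 * X t' = R t' / 2 + Q t' / 2 + M / \<mu> * Q t' + M / \<mu> * R t'"
        by (simp add: c4_def X_def algebra_simps)
      ultimately show ?thesis by simp
    qed
    finally show ?thesis .
  qed
  have Hle: "\<bar>Hf t'\<bar> \<le> c3 * X t'" if t': "t' \<ge> t0" for t'
  proof -
    have "\<bar>Hf t'\<bar> \<le> \<bar>Huv t'\<bar> + \<epsilon> / 2 * Q t'" using abs_triangle_ineq[of "Huv t'" "\<epsilon> / 2 * Q t'"] Q0[OF t'] par by (simp add: Hf_def)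
    also have "\<dots> \<le> (P t' + R t') / 2 + \<epsilon> / 2 * Q t'" using st[OF t'] by simp
    also have "\<dots> \<le> (Q t' / \<mu> + R t') / 2 + \<epsilon> / 2 * Q t'"
      by (intro add_right_mono divide_right_mono) (use PQ[OF t'] in auto)
    also have "\<dots> \<le> c3 * X t'"
    proof -
      have "c3 * X t' = (Q t' / \<mu> + R t') / 2 + \<epsilon> / 2 * Q t' + (R t' / \<mu> + \<epsilon> * R t' + Q t') / 2"
        by (simp add: c3_def X_def algebra_simps add_divide_distrib)
      moreover have "0 \<le> (R t' / \<mu> + \<epsilon> * R t' + Q t') / 2" using R0[OF t'] Q0[OF t'] mu par by simp
      ultimately show ?thesis by linarith
    qed
    finally show ?thesis .
  qed
  have Hd: "R t' - Q t' + UF t' - UD t' \<le> c2 * R t' - c1 * Q t'" if "t' > t0" for t'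
  proof -
    have t': "t' \<ge> t0" using that by simp
    have UF: "UF t' \<le> K * P t'" using st[OF t'] by blast
    have "\<bar>UD t'\<bar> \<le> A (sqrt (P t' + Q t' + R t')) * (\<eta> * P t' / 2 + R t' / (2 * \<eta>))"
      using dv[OF that] eta by blast
    also have "\<dots> \<le> As * (\<eta> * P t' / 2 + R t' / (2 * \<eta>))"
      using Abnd[OF t'] eta P0[OF t'] R0[OF t'] by (intro mult_right_mono) auto
    finally have UD: "- UD t' \<le> As * \<eta> * P t' / 2 + As * R t' / (2 * \<eta>)" by (simp add: algebra_simps)
    have Aeta: "As * \<eta> \<le> \<mu> - K"
    proof -
      have "As * \<eta> = (\<mu> - K) * (As / (As + 1))" by (simp add: eta_def)
      also have "\<dots> \<le> (\<mu> - K) * 1" using par As0 by (intro mult_left_mono) auto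
      finally show ?thesis by simp
    qed
    have "As * \<eta> * P t' / 2 \<le> (\<mu> - K) * P t' / 2"
      using Aeta P0[OF t'] by (intro divide_right_mono mult_right_mono) auto
    then have "R t' - Q t' + UF t' - UD t' \<le> R t' - Q t' + (\<mu> + K) / 2 * P t' + As * R t' / (2 * \<eta>)"
    proof -
      have "(\<mu> - K) * P t' / 2 + K * P t' = (\<mu> + K) / 2 * P t'" by (simp add: field_simps)
      then show ?thesis using UF UD \<open>As * \<eta> * P t' / 2 \<le> (\<mu> - K) * P t' / 2\<close> by linarith
    qed
    also have "\<dots> \<le> R t' - Q t' + (\<mu> + K) / 2 * (Q t' / \<mu>) + As * R t' / (2 * \<eta>)"
      using PQ[OF t'] par by (intro add_right_mono add_left_mono mult_left_mono) auto
    also have "\<dots> = c2 * R t' - c1 * Q t'"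
      using mu eta by (simp add: c1_def c2_def field_simps)
    finally show ?thesis .
  qed
  define L where "L t = E t + \<delta> * Hf t" for t
  have Lge: "\<rho> / 2 * X t' \<le> L t'" if t': "t' \<ge> t0" for t'
  proof -
    have "\<delta> * \<bar>Hf t'\<bar> \<le> \<delta> * (c3 * X t')" using Hle[OF t'] delta by (intro mult_left_mono) auto
    also have "\<dots> = (\<delta> * c3) * X t'" by simp
    also have "\<dots> \<le> \<rho> / 2 * X t'" using dc3 R0[OF t'] Q0[OF t'] by (intro mult_right_mono) (auto simp: X_def)
    moreover have "\<delta> * (- \<bar>Hf t'\<bar>) \<le> \<delta> * Hf t'" using delta by (intro mult_left_mono) auto
    ultimately have "- (\<rho> / 2 * X t') \<le> \<delta> * Hf t'" by simp
    then show ?thesis using Ege[OF t'] by (simp add: L_def)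
  qed
  have Lle: "L t' \<le> c5 * X t'" if t': "t' \<ge> t0" for t'
  proof -
    have "\<delta> * \<bar>Hf t'\<bar> \<le> \<delta> * (c3 * X t')" using Hle[OF t'] delta by (intro mult_left_mono) auto
    also have "\<dots> = (\<delta> * c3) * X t'" by simp
    also have "\<dots> \<le> \<rho> / 2 * X t'" using dc3 R0[OF t'] Q0[OF t'] by (intro mult_right_mono) (auto simp: X_def)
    moreover have "\<delta> * Hf t' \<le> \<delta> * \<bar>Hf t'\<bar>" using delta by (intro mult_left_mono) auto
    ultimately have "\<delta> * Hf t' \<le> \<rho> / 2 * X t'" by simp
    then show ?thesis using Ele4[OF t'] by (simp add: L_def c5_def algebra_simps)
  qed
  have Ld: "(L has_real_derivative (- \<epsilon> * S t' - DV t') + \<delta> * (R t' - Q t' + UF t' - UD t')) (at t')" if "t' > t0" for t'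
  proof -
    have d1: "(E has_real_derivative (- \<epsilon> * S t' - DV t')) (at t')" using dv[OF that] unfolding E_def[abs_def] by blast
    have d2: "(Hf has_real_derivative (R t' - Q t' + UF t' - UD t')) (at t')" using dv[OF that] unfolding Hf_def[abs_def] by blast
    show ?thesis unfolding L_def[abs_def] using DERIV_add[OF d1 DERIV_cmult[OF d2, of \<delta>]] by simp
  qed
  have Ldle: "(- \<epsilon> * S t' - DV t') + \<delta> * (R t' - Q t' + UF t' - UD t') \<le> - \<gamma> * L t'" if "t' > t0" for t'
  proof -
    have t': "t' \<ge> t0" using that by simp
    have "\<delta> * (R t' - Q t' + UF t' - UD t') \<le> \<delta> * (c2 * R t' - c1 * Q t')"
      using Hd[OF that] delta by (intro mult_left_mono) auto
    moreover have "\<kappa> * \<mu> * R t' \<le> \<kappa> * S t'"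
    proof -
      have "\<mu> * R t' \<le> S t'" using st[OF t'] by blast
      then have "\<kappa> * (\<mu> * R t') \<le> \<kappa> * S t'" using kap by (intro mult_left_mono) auto
      then show ?thesis by (simp add: mult.assoc)
    qed
    moreover have "\<delta> * c2 * R t' \<le> \<kappa> * \<mu> / 2 * R t'" using dc2 R0[OF t'] by (intro mult_right_mono) auto
    moreover have "c6 * R t' \<le> \<kappa> * \<mu> / 2 * R t'" using c6 R0[OF t'] by (intro mult_right_mono) auto
    moreover have "c6 * Q t' \<le> \<delta> * c1 * Q t'" using c6 Q0[OF t'] by (intro mult_right_mono) auto
    ultimately have "(- \<epsilon> * S t' - DV t') + \<delta> * (R t' - Q t' + UF t' - UD t') \<le> - c6 * X t'"
      using Ed[OF that] by (simp add: X_def algebra_simps)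
    also have "\<dots> \<le> - \<gamma> * L t'"
    proof -
      have "\<gamma> * L t' \<le> \<gamma> * (c5 * X t')" using Lle[OF t'] gam by (intro mult_left_mono) auto
      also have "\<dots> = c6 * X t'" using c5 by (simp add: gamma_def)
      finally show ?thesis by simp
    qed
    finally show ?thesis .
  qed
  have Lcont: "continuous_on {t0..} L"
  proof -
    have "continuous_on {t0..} (\<lambda>t. (R t / 2 + Q t / 2 - Eg t) + \<delta> * (Huv t + \<epsilon> / 2 * Q t))"
      by (rule continuous_on_add[OF ct(1) continuous_on_mult[OF continuous_on_const ct(2)]])
    then show ?thesis by (simp add: L_def[abs_def] E_def Hf_def)
  qed
  have Ldecay: "L t' \<le> exp (- \<gamma> * (t' - t0)) * L t0" if t': "t' \<ge> t0" for t'
    by (rule gron1[OF Lcont Ld Ldle t'])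
  have Xdecay: "X t' \<le> (2 * c5 / \<rho>) * exp (- \<gamma> * (t' - t0)) * X t0" if t': "t' \<ge> t0" for t'
  proof -
    have "\<rho> / 2 * X t' \<le> exp (- \<gamma> * (t' - t0)) * L t0" using Lge[OF t'] Ldecay[OF t'] by linarith
    also have "\<dots> \<le> exp (- \<gamma> * (t' - t0)) * (c5 * X t0)" using Lle[of t0] by (intro mult_left_mono) auto
    finally have "\<rho> / 2 * X t' \<le> exp (- \<gamma> * (t' - t0)) * (c5 * X t0)" .
    then show ?thesis using rho by (simp add: field_simps)
  qed
  define X0 where "X0 = X t0"
  have X00: "0 \<le> X0" using Q0[of t0] R0[of t0] by (simp add: X0_def X_def)
  have Wd: "(W has_real_derivative (- 2 * W t' / \<epsilon> + 2 * WZ t')) (at t')" if "t' > t0" for t'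
    using dv[OF that] by blast
  have Wdle: "- 2 * W t' / \<epsilon> + 2 * WZ t' \<le> - W t' / \<epsilon> + (c8 * X0) * exp (- \<gamma> * (t' - t0))" if "t' > t0" for t'
  proof -
    have t': "t' \<ge> t0" using that by simp
    have "2 * WZ t' \<le> W t' / \<epsilon> + 3 * \<epsilon> * ((A (sqrt (P t' + Q t' + R t')))\<^sup>2 * R t' + R t' / \<epsilon>\<^sup>2 + M\<^sup>2 * P t')"
      using dv[OF that] PQr[OF t'] r0 unfolding M_def by blast
    also have "\<dots> \<le> W t' / \<epsilon> + 3 * \<epsilon> * (As\<^sup>2 * R t' + R t' / \<epsilon>\<^sup>2 + M\<^sup>2 * (Q t' / \<mu>))"
    proof -
      have "(A (sqrt (P t' + Q t' + R t')))\<^sup>2 \<le> As\<^sup>2" using Abnd[OF t'] by (intro power_mono) auto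
      then have "(A (sqrt (P t' + Q t' + R t')))\<^sup>2 * R t' \<le> As\<^sup>2 * R t'" using R0[OF t'] by (intro mult_right_mono) auto
      moreover have "M\<^sup>2 * P t' \<le> M\<^sup>2 * (Q t' / \<mu>)" using PQ[OF t'] by (intro mult_left_mono) auto
      ultimately show ?thesis using par by (intro add_left_mono mult_left_mono) auto
    qed
    also have "\<dots> \<le> W t' / \<epsilon> + c7 * X t'"
    proof -
      have "c7 * X t' = 3 * \<epsilon> * (As\<^sup>2 * R t' + R t' / \<epsilon>\<^sup>2 + M\<^sup>2 * (Q t' / \<mu>))
          + 3 * \<epsilon> * (As\<^sup>2 + 1 / \<epsilon>\<^sup>2) * Q t' + 3 * \<epsilon> * M\<^sup>2 / \<mu> * R t'"
        using par mu by (simp add: c7_def X_def field_simps)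
      moreover have "0 \<le> 3 * \<epsilon> * (As\<^sup>2 + 1 / \<epsilon>\<^sup>2) * Q t'" using par Q0[OF t'] by simp
      moreover have "0 \<le> 3 * \<epsilon> * M\<^sup>2 / \<mu> * R t'" using par mu R0[OF t'] by simp
      ultimately show ?thesis by linarith
    qed
    also have "\<dots> \<le> W t' / \<epsilon> + c7 * ((2 * c5 / \<rho>) * exp (- \<gamma> * (t' - t0)) * X t0)"
      using Xdecay[OF t'] c7 by (intro add_left_mono mult_left_mono) auto
    also have "\<dots> = W t' / \<epsilon> + (c8 * X0) * exp (- \<gamma> * (t' - t0))"
      by (simp add: c8_def X0_def)
    finally show ?thesis by simp
  qed
  have W0: "\<And>t'. t' \<ge> t0 \<Longrightarrow> 0 \<le> W t'" using st by blast
  have Wb: "exp (\<beta> * (t - t0)) * W t \<le> W t0 + c8 * X0 / (\<gamma> - \<beta>)"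
  proof -
    have cx: "0 \<le> c8 * X0" using \<open>0 \<le> c8\<close> X00 by simp
    show ?thesis by (rule gron2[OF ct(3) Wd Wdle W0 beta(2) beta(3) cx t])
  qed
  define d0s where "d0s = P t0 + Q t0 + R t0 + T t0"
  have d0s0: "0 \<le> d0s" using st[of t0] Q0[of t0] by (auto simp: d0s_def)
  have X0d: "X0 \<le> d0s" using st[of t0] by (auto simp: X0_def X_def d0s_def)
  have W0d: "W t0 \<le> (2 * \<epsilon>\<^sup>2 + 2) * d0s"
  proof -
    have "W t0 \<le> 2 * \<epsilon>\<^sup>2 * T t0 + 2 * R t0" using st[of t0] by blast
    also have "\<dots> \<le> 2 * \<epsilon>\<^sup>2 * d0s + 2 * d0s"
    proof -
      have "T t0 \<le> d0s" "R t0 \<le> d0s" using st[of t0] Q0[of t0] by (auto simp: d0s_def)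
      then show ?thesis using par by (intro add_mono mult_left_mono) auto
    qed
    finally show ?thesis by (simp add: algebra_simps)
  qed
  have s0: "0 \<le> t - t0" using t by simp
  define e where "e = exp (- \<beta> * (t - t0))"
  have e0: "0 < e" by (simp add: e_def)
  have eg: "exp (- \<gamma> * (t - t0)) \<le> e" unfolding e_def exp_le_cancel_iff using beta s0
    by (intro mult_right_mono) auto
  have Xt: "X t \<le> (2 * c5 / \<rho>) * e * d0s"
  proof -
    have "X t \<le> (2 * c5 / \<rho>) * exp (- \<gamma> * (t - t0)) * X0" using Xdecay[OF t] by (simp add: X0_def)
    also have "\<dots> \<le> (2 * c5 / \<rho>) * e * d0s"
      using eg X0d X00 c5 rho e0 by (intro mult_mono) auto
    finally show ?thesis .
  qed
  have Wt: "W t \<le> e * ((2 * \<epsilon>\<^sup>2 + 2) * d0s + c8 * d0s / (\<gamma> - \<beta>))"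
  proof -
    have "W t = e * (exp (\<beta> * (t - t0)) * W t)" by (simp add: e_def mult.assoc[symmetric] exp_add[symmetric])
    also have "\<dots> \<le> e * (W t0 + c8 * X0 / (\<gamma> - \<beta>))" using Wb e0 by (intro mult_left_mono) auto
    also have "\<dots> \<le> e * ((2 * \<epsilon>\<^sup>2 + 2) * d0s + c8 * d0s / (\<gamma> - \<beta>))"
    proof -
      have "c8 * X0 / (\<gamma> - \<beta>) \<le> c8 * d0s / (\<gamma> - \<beta>)"
        using c8 X0d beta by (intro divide_right_mono mult_left_mono) auto
      then show ?thesis using W0d e0 by (intro mult_left_mono add_mono) auto
    qed
    finally show ?thesis .
  qed
  have dt: "P t + Q t + R t + T t \<le> Ctot * e * d0s"
  proof -
    have "P t + Q t + R t + T t \<le> Q t / \<mu> + X t + 2 * (W t + R t) / \<epsilon>\<^sup>2"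
      using PQ[OF t] st[OF t] by (simp add: X_def)
    also have "\<dots> \<le> (1 + 1 / \<mu> + 2 / \<epsilon>\<^sup>2) * X t + (2 / \<epsilon>\<^sup>2) * W t"
    proof -
      have "(1 + 1 / \<mu> + 2 / \<epsilon>\<^sup>2) * X t + (2 / \<epsilon>\<^sup>2) * W t = Q t / \<mu> + X t + 2 * (W t + R t) / \<epsilon>\<^sup>2
         + R t / \<mu> + 2 * Q t / \<epsilon>\<^sup>2"
        using par mu by (simp add: X_def field_simps)
      moreover have "0 \<le> R t / \<mu>" "0 \<le> 2 * Q t / \<epsilon>\<^sup>2" using R0[OF t] Q0[OF t] mu by auto
      ultimately show ?thesis by linarith
    qed
    also have "\<dots> \<le> (1 + 1 / \<mu> + 2 / \<epsilon>\<^sup>2) * ((2 * c5 / \<rho>) * e * d0s)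
        + (2 / \<epsilon>\<^sup>2) * (e * ((2 * \<epsilon>\<^sup>2 + 2) * d0s + c8 * d0s / (\<gamma> - \<beta>)))"
      using Xt Wt mu by (intro add_mono mult_left_mono) auto
    also have "\<dots> = Ctot * e * d0s"
      by (simp add: Ctot_def algebra_simps add_divide_distrib)
    finally show ?thesis .
  qed
  have Ct0: "0 \<le> Ctot"
  proof -
    have "0 \<le> c8 / (\<gamma> - \<beta>)" using c8 beta by simp
    then show ?thesis using mu c5 rho par by (simp add: Ctot_def)
  qed
  have esq: "(exp (- (\<beta> / 2) * (t - t0)))\<^sup>2 = e"
    by (simp add: e_def power2_eq_square exp_add[symmetric])
  have "(sqrt (P t + Q t + R t + T t))\<^sup>2 \<le> (sqrt Ctot * exp (- (\<beta> / 2) * (t - t0)) * sqrt d0s)\<^sup>2"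
  proof -
    have nn: "0 \<le> P t + Q t + R t + T t" using st[OF t] Q0[OF t] by auto
    have "(sqrt Ctot * exp (- (\<beta> / 2) * (t - t0)) * sqrt d0s)\<^sup>2 = Ctot * e * d0s"
      by (simp only: power_mult_distrib esq real_sqrt_pow2[OF Ct0] real_sqrt_pow2[OF d0s0])
    then show ?thesis using dt nn by simp
  qed
  then have "sqrt (P t + Q t + R t + T t) \<le> sqrt Ctot * exp (- (\<beta> / 2) * (t - t0)) * sqrt d0s"
    by (rule power2_le_imp_le) (use Ct0 d0s0 in simp)
  then show ?thesis by (simp add: d0s_def)
qed

lemma ode_main:
  fixes \<mu> \<epsilon> K a0 \<alpha> :: real and A Mb :: "real \<Rightarrow> real"
  assumes par: "0 < \<epsilon>" "0 < \<mu>" "0 < K" "K < \<mu>" "0 < \<epsilon> * \<mu> + a0"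
    and A_mono: "mono_on {0..} A" and A_nn: "\<And>r. r \<ge> 0 \<Longrightarrow> A r \<ge> 0"
    and Mb_nn: "\<And>r. Mb r \<ge> 0" and \<alpha>: "0 < \<alpha>"
  shows "\<exists>Dc Cc. Dc > 0 \<and> Cc > 0 \<and> (\<forall>t0 P Q R S T W Eg Huv DV UD UF WZ t.
     odehyp \<mu> \<epsilon> K a0 A Mb t0 P Q R S T W Eg Huv DV UD UF WZ \<and>
     sqrt (P t0 + Q t0 + R t0 + T t0) \<le> \<alpha> \<and> t \<ge> t0 \<longrightarrow>
     sqrt (P t + Q t + R t + T t) \<le> Dc * exp (- Cc * (t - t0)) * sqrt (P t0 + Q t0 + R t0 + T t0))"
proof -
  define \<kappa> where "\<kappa> = \<epsilon> + min a0 0 / \<mu>"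
  define \<rho> where "\<rho> = (1 - K / \<mu>) / 2"
  define E0b where "E0b = (1/2 + Mb \<alpha>) * \<alpha>\<^sup>2"
  define B where "B = sqrt ((1 + 1 / \<mu>) * E0b / \<rho>)"
  define M where "M = Mb (max \<alpha> B)"
  define As where "As = A B"
  define \<eta> where "\<eta> = (\<mu> - K) / (As + 1)"
  define c1 where "c1 = (\<mu> - K) / (2 * \<mu>)"
  define c2 where "c2 = 1 + As / (2 * \<eta>)"
  define c3 where "c3 = (1 / \<mu> + \<epsilon> + 1) / 2"
  define c4 where "c4 = 1/2 + M / \<mu>"
  define \<delta> where "\<delta> = min (\<rho> / (2 * c3)) (\<kappa> * \<mu> / (2 * c2))"
  define c5 where "c5 = c4 + \<rho> / 2"
  define c6 where "c6 = min (\<kappa> * \<mu> / 2) (\<delta> * c1)"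
  define \<gamma> where "\<gamma> = c6 / c5"
  define c7 where "c7 = 3 * \<epsilon> * (As\<^sup>2 + 1 / \<epsilon>\<^sup>2) + 3 * \<epsilon> * M\<^sup>2 / \<mu>"
  define c8 where "c8 = c7 * (2 * c5 / \<rho>)"
  define \<beta> where "\<beta> = min (1 / \<epsilon>) \<gamma> / 2"
  define Ctot where "Ctot = (1 + 1 / \<mu> + 2 / \<epsilon>\<^sup>2) * (2 * c5 / \<rho>) + (2 / \<epsilon>\<^sup>2) * (2 * \<epsilon>\<^sup>2 + 2 + c8 / (\<gamma> - \<beta>))"
  note defs = \<kappa>_def \<rho>_def E0b_def B_def M_def As_def \<eta>_def c1_def c2_def c3_def c4_def \<delta>_def
    c5_def c6_def \<gamma>_def c7_def c8_def \<beta>_def Ctot_def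
  have pos: "0 < \<beta> \<and> 0 \<le> Ctot"
    by (rule ode_pos[OF par A_mono A_nn Mb_nn \<alpha> defs])
  show ?thesis
  proof (intro exI conjI allI impI)
    show "0 < max (sqrt Ctot) 1" by simp
    show "0 < \<beta> / 2" using pos by simp
    fix t0 P Q R S T W Eg Huv DV UD UF WZ t
    assume h: "odehyp \<mu> \<epsilon> K a0 A Mb t0 P Q R S T W Eg Huv DV UD UF WZ \<and>
     sqrt (P t0 + Q t0 + R t0 + T t0) \<le> \<alpha> \<and> t \<ge> t0"
    have core: "sqrt (P t + Q t + R t + T t) \<le> sqrt Ctot * exp (- (\<beta> / 2) * (t - t0)) * sqrt (P t0 + Q t0 + R t0 + T t0)"
      using h by (intro ode_core[OF par A_mono A_nn Mb_nn \<alpha> _ _ _ defs]) auto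
    have nn: "0 \<le> P t0 + Q t0 + R t0 + T t0"
    proof -
      have "0 \<le> P t0 \<and> 0 \<le> R t0 \<and> 0 \<le> T t0 \<and> \<mu> * P t0 \<le> Q t0"
        using h unfolding odehyp_def by auto
      moreover have "0 \<le> \<mu> * P t0" using par calculation by simp
      ultimately show ?thesis by linarith
    qed
    have "sqrt Ctot * exp (- (\<beta> / 2) * (t - t0)) * sqrt (P t0 + Q t0 + R t0 + T t0)
        \<le> max (sqrt Ctot) 1 * exp (- (\<beta> / 2) * (t - t0)) * sqrt (P t0 + Q t0 + R t0 + T t0)"
      using nn by (intro mult_right_mono) auto
    then show "sqrt (P t + Q t + R t + T t) \<le> max (sqrt Ctot) 1 * exp (- (\<beta> / 2) * (t - t0)) * sqrt (P t0 + Q t0 + R t0 + T t0)"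
      using core by linarith
  qed
qed



lemma jc_to: "continuous_on D (\<lambda>(x,t). f x t) \<Longrightarrow> continuous_on D (\<lambda>p. f (fst p) (snd p))"
  by (simp add: case_prod_unfold)
lemma jc_from: "continuous_on D (\<lambda>p. f (fst p) (snd p)) \<Longrightarrow> continuous_on D (\<lambda>(x,t). f x t)"
  by (simp add: case_prod_unfold)

lemma ic: fixes f :: "real \<Rightarrow> real" shows "continuous_on {0..1} f \<Longrightarrow> f integrable_on {0..(1::real)}"
  by (rule integrable_continuous_real)

lemma int_nn: fixes f :: "real \<Rightarrow> real" shows "continuous_on {0..1} f \<Longrightarrow> (\<And>x. 0 \<le> f x) \<Longrightarrow> 0 \<le> integral {0..(1::real)} f"
  by (rule integral_nonneg[OF ic]) auto

lemma int_le: fixes f g :: "real \<Rightarrow> real" shows "continuous_on {0..1} f \<Longrightarrow> continuous_on {0..1} g \<Longrightarrow> (\<And>x. f x \<le> g x) \<Longrightarrow> integral {0..(1::real)} f \<le> integral {0..1} g"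
  by (rule integral_le[OF ic ic]) auto

lemma int_abs_le: fixes f g :: "real \<Rightarrow> real" shows "continuous_on {0..1} f \<Longrightarrow> continuous_on {0..1} g \<Longrightarrow> (\<And>x. x \<in> {0<..<1} \<Longrightarrow> \<bar>f x\<bar> \<le> g x) \<Longrightarrow> \<bar>integral {0..(1::real)} f\<bar> \<le> integral {0..1} g"
proof -
  assume cf: "continuous_on {0..1} f" and cg: "continuous_on {0..1} g" and le: "\<And>x. x \<in> {0<..<1} \<Longrightarrow> \<bar>f x\<bar> \<le> g x"
  have "integral {0..1} f \<le> integral {0..1} g" using le by (intro int_le_open01[OF cf cg]) (auto simp: abs_le_iff)
  moreover have "integral {0..1} (\<lambda>x. - f x) \<le> integral {0..1} g" using le cf
    by (intro int_le_open01[OF _ cg]) (auto simp: abs_le_iff intro: continuous_intros)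
  ultimately show ?thesis by (simp add: abs_le_iff)
qed

lemma int_add: fixes f g :: "real \<Rightarrow> real" shows "continuous_on {0..1} f \<Longrightarrow> continuous_on {0..1} g \<Longrightarrow> integral {0..(1::real)} (\<lambda>x. f x + g x) = integral {0..1} f + integral {0..1} g"
  by (rule integral_add[OF ic ic])
lemma int_diff: fixes f g :: "real \<Rightarrow> real" shows "continuous_on {0..1} f \<Longrightarrow> continuous_on {0..1} g \<Longrightarrow> integral {0..(1::real)} (\<lambda>x. f x - g x) = integral {0..1} f - integral {0..1} g"
  by (rule integral_diff[OF ic ic])

lemma absprod: fixes a b :: real shows "\<bar>a * b\<bar> \<le> a\<^sup>2 / 2 + b\<^sup>2 / 2"
proof -
  have "0 \<le> (\<bar>a\<bar> - \<bar>b\<bar>)\<^sup>2" by simp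
  then show ?thesis by (simp add: power2_eq_square algebra_simps abs_mult)
qed

lemma sq_sum2: fixes a b :: real shows "(a + b)\<^sup>2 \<le> 2 * (a\<^sup>2 + b\<^sup>2)"
proof -
  have "0 \<le> (a - b)\<^sup>2" by simp
  then show ?thesis by (simp add: power2_eq_square algebra_simps)
qed

locale sol = Fhyp +
  fixes \<epsilon> :: real and a :: "real \<Rightarrow> real \<Rightarrow> real \<Rightarrow> real \<Rightarrow> real \<Rightarrow> real \<Rightarrow> real"
    and A :: "real \<Rightarrow> real" and a0 :: real and Mb :: "real \<Rightarrow> real" and t0 :: real
    and u v ux uxx uxt uxxt utt :: "real \<Rightarrow> real \<Rightarrow> real"
  assumes eps: "0 < \<epsilon>" and t00: "0 \<le> t0"
    and du_x: "\<And>x t. x \<in> {0..1} \<Longrightarrow> t \<in> {t0..} \<Longrightarrow> ((\<lambda>y. u y t) has_real_derivative ux x t) (at x within {0..1})"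
    and dux_x: "\<And>x t. x \<in> {0..1} \<Longrightarrow> t \<in> {t0..} \<Longrightarrow> ((\<lambda>y. ux y t) has_real_derivative uxx x t) (at x within {0..1})"
    and du_t: "\<And>x t. x \<in> {0..1} \<Longrightarrow> t \<in> {t0..} \<Longrightarrow> ((\<lambda>s. u x s) has_real_derivative v x t) (at t within {t0..})"
    and dv_x: "\<And>x t. x \<in> {0..1} \<Longrightarrow> t \<in> {t0..} \<Longrightarrow> ((\<lambda>y. v y t) has_real_derivative uxt x t) (at x within {0..1})"
    and duxt_x: "\<And>x t. x \<in> {0..1} \<Longrightarrow> t \<in> {t0..} \<Longrightarrow> ((\<lambda>y. uxt y t) has_real_derivative uxxt x t) (at x within {0..1})"
    and dv_t: "\<And>x t. x \<in> {0..1} \<Longrightarrow> t \<in> {t0..} \<Longrightarrow> ((\<lambda>s. v x s) has_real_derivative utt x t) (at t within {t0..})"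
    and c_u: "continuous_on ({0..1} \<times> {t0..}) (\<lambda>(x,t). u x t)"
    and c_ux: "continuous_on ({0..1} \<times> {t0..}) (\<lambda>(x,t). ux x t)"
    and c_uxx: "continuous_on ({0..1} \<times> {t0..}) (\<lambda>(x,t). uxx x t)"
    and c_v: "continuous_on ({0..1} \<times> {t0..}) (\<lambda>(x,t). v x t)"
    and c_uxt: "continuous_on ({0..1} \<times> {t0..}) (\<lambda>(x,t). uxt x t)"
    and c_uxxt: "continuous_on ({0..1} \<times> {t0..}) (\<lambda>(x,t). uxxt x t)"
    and c_utt: "continuous_on ({0..1} \<times> {t0..}) (\<lambda>(x,t). utt x t)"
    and eqn: "\<And>x t. x \<in> {0<..<1} \<Longrightarrow> t \<in> {t0<..} \<Longrightarrow>
       - \<epsilon> * uxxt x t + utt x t - uxx x t = F (u x t) - a x t (u x t) (ux x t) (uxx x t) (v x t) * v x t"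
    and bc: "\<And>t. t \<in> {t0..} \<Longrightarrow> u 0 t = 0 \<and> u 1 t = 0"
    and a_low: "\<And>x t p q r s. x \<in> {0<..<1} \<Longrightarrow> t \<ge> 0 \<Longrightarrow> a0 \<le> a x t p q r s"
    and a_bnd: "\<And>x t \<phi> \<psi>. x \<in> {0<..<1} \<Longrightarrow> t \<ge> 0 \<Longrightarrow> (\<phi>, \<psi>) \<in> Gamma \<Longrightarrow>
       \<bar>a x t (\<phi> x) (deriv \<phi> x) (deriv (deriv \<phi>) x) (\<psi> x)\<bar> \<le> A (dist_d1 \<phi> \<psi>)"
    and A_nn: "\<And>r. r \<ge> 0 \<Longrightarrow> A r \<ge> 0"
    and Mb: "\<And>r z. \<bar>z\<bar> \<le> r \<Longrightarrow> \<bar>F' z\<bar> \<le> Mb r"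
begin

lemma dux_t: "x \<in> {0..1} \<Longrightarrow> t \<in> {t0..} \<Longrightarrow> ((\<lambda>s. ux x s) has_real_derivative uxt x t) (at t within {t0..})"
  by (rule mixed_partial[OF du_t du_x dv_x c_v c_uxt])

lemma duxx_t: "x \<in> {0..1} \<Longrightarrow> t \<in> {t0..} \<Longrightarrow> ((\<lambda>s. uxx x s) has_real_derivative uxxt x t) (at t within {t0..})"
  by (rule mixed_partial[OF dux_t dux_x duxt_x c_uxt c_uxxt])

lemmas jc = jc_to[OF c_u] jc_to[OF c_ux] jc_to[OF c_uxx] jc_to[OF c_v] jc_to[OF c_uxt] jc_to[OF c_uxxt] jc_to[OF c_utt]

lemma jc_Fu: "continuous_on ({0..1} \<times> {t0..}) (\<lambda>p. F (u (fst p) (snd p)))"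
  by (rule continuous_on_compose2[OF cF jc(1)]) auto

lemma jc_Gu: "continuous_on ({0..1} \<times> {t0..}) (\<lambda>p. prim F (u (fst p) (snd p)))"
proof -
  have "continuous_on UNIV (prim F)"
    using dG by (intro continuous_at_imp_continuous_on) (auto intro: DERIV_isCont)
  then show ?thesis by (rule continuous_on_compose2[OF _ jc(1)]) auto
qed

lemma sl:
  assumes "t \<ge> t0"
  shows "continuous_on {0..1} (\<lambda>x. u x t)" "continuous_on {0..1} (\<lambda>x. ux x t)"
    "continuous_on {0..1} (\<lambda>x. uxx x t)" "continuous_on {0..1} (\<lambda>x. v x t)"
    "continuous_on {0..1} (\<lambda>x. uxt x t)" "continuous_on {0..1} (\<lambda>x. uxxt x t)"
    "continuous_on {0..1} (\<lambda>x. utt x t)"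
  using cont_slice_x[OF c_u assms] cont_slice_x[OF c_ux assms] cont_slice_x[OF c_uxx assms]
    cont_slice_x[OF c_v assms] cont_slice_x[OF c_uxt assms] cont_slice_x[OF c_uxxt assms]
    cont_slice_x[OF c_utt assms] by auto

lemma sl_F: "t \<ge> t0 \<Longrightarrow> continuous_on {0..1} (\<lambda>x. F (u x t))"
  by (rule continuous_on_compose2[OF cF sl(1)]) auto

lemma sl_G: "t \<ge> t0 \<Longrightarrow> continuous_on {0..1} (\<lambda>x. prim F (u x t))"
proof -
  assume t: "t \<ge> t0"
  have "continuous_on UNIV (prim F)"
    using dG by (intro continuous_at_imp_continuous_on) (auto intro: DERIV_isCont)
  then show ?thesis by (rule continuous_on_compose2[OF _ sl(1)[OF t]]) auto
qed

lemma v_bc: "t \<in> {t0..} \<Longrightarrow> v 0 t = 0 \<and> v 1 t = 0"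
proof -
  assume t: "t \<in> {t0..}"
  have "((\<lambda>s. u 0 s) has_real_derivative 0) (at t within {t0..})"
    by (rule has_field_derivative_transform_within[OF DERIV_const[of 0] zero_less_one t]) (use bc in auto)
  then have v0: "v 0 t = 0" using has_field_derivative_unique[OF du_t[of 0 t] _ not_bot_Ici[OF t]] t by auto
  have "((\<lambda>s. u 1 s) has_real_derivative 0) (at t within {t0..})"
    by (rule has_field_derivative_transform_within[OF DERIV_const[of 0] zero_less_one t]) (use bc in auto)
  then have v1: "v 1 t = 0" using has_field_derivative_unique[OF du_t[of 1 t] _ not_bot_Ici[OF t]] t by auto
  show ?thesis using v0 v1 by simp
qed


definition "IP t = integral {0..1} (\<lambda>x. (u x t)\<^sup>2)"
definition "IQ t = integral {0..1} (\<lambda>x. (ux x t)\<^sup>2)"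
definition "IR t = integral {0..1} (\<lambda>x. (v x t)\<^sup>2)"
definition "IS t = integral {0..1} (\<lambda>x. (uxt x t)\<^sup>2)"
definition "IT t = integral {0..1} (\<lambda>x. (uxx x t)\<^sup>2)"
definition "Dd x t = uxx x t + \<epsilon> * uxxt x t + F (u x t) - utt x t"
definition "w x t = \<epsilon> * uxx x t - v x t"
definition "IW t = integral {0..1} (\<lambda>x. (w x t)\<^sup>2)"
definition "IEg t = integral {0..1} (\<lambda>x. prim F (u x t))"
definition "IHuv t = integral {0..1} (\<lambda>x. u x t * v x t)"
definition "IDV t = integral {0..1} (\<lambda>x. v x t * Dd x t)"
definition "IUD t = integral {0..1} (\<lambda>x. u x t * Dd x t)"
definition "IUF t = integral {0..1} (\<lambda>x. u x t * F (u x t))"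
definition "IWZ t = integral {0..1} (\<lambda>x. w x t * (Dd x t - v x t / \<epsilon> - F (u x t)))"

lemma sl_D: "t \<ge> t0 \<Longrightarrow> continuous_on {0..1} (\<lambda>x. Dd x t)"
  unfolding Dd_def using sl sl_F by (intro continuous_intros) auto
lemma sl_w: "t \<ge> t0 \<Longrightarrow> continuous_on {0..1} (\<lambda>x. w x t)"
  unfolding w_def using sl by (intro continuous_intros) auto

lemma du_x': "t \<ge> t0 \<Longrightarrow> (\<And>x. x \<in> {0..1} \<Longrightarrow> ((\<lambda>y. u y t) has_real_derivative ux x t) (at x within {0..1}))"
  using du_x by auto
lemma dv_x': "t \<ge> t0 \<Longrightarrow> (\<And>x. x \<in> {0..1} \<Longrightarrow> ((\<lambda>y. v y t) has_real_derivative uxt x t) (at x within {0..1}))"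
  using dv_x by auto

context
  fixes t :: real assumes t: "t \<ge> t0"
begin

lemma nnP: "0 \<le> IP t" unfolding IP_def using sl[OF t] by (intro int_nn continuous_intros) auto
lemma nnQ: "0 \<le> IQ t" unfolding IQ_def using sl[OF t] by (intro int_nn continuous_intros) auto
lemma nnR: "0 \<le> IR t" unfolding IR_def using sl[OF t] by (intro int_nn continuous_intros) auto
lemma nnT: "0 \<le> IT t" unfolding IT_def using sl[OF t] by (intro int_nn continuous_intros) auto
lemma nnW: "0 \<le> IW t" unfolding IW_def using sl_w[OF t] by (intro int_nn continuous_intros) auto

lemma PQ: "0 < c \<Longrightarrow> c < pi \<Longrightarrow> c\<^sup>2 * IP t \<le> IQ t"
  unfolding IP_def IQ_def
  by (rule poincare01[OF du_x'[OF t] sl(2)[OF t]]) (use bc t in auto)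

lemma RS: "0 < c \<Longrightarrow> c < pi \<Longrightarrow> c\<^sup>2 * IR t \<le> IS t"
  unfolding IR_def IS_def
  by (rule poincare01[OF dv_x'[OF t] sl(5)[OF t]]) (use v_bc t in auto)

lemma u_sup: "x \<in> {0..1} \<Longrightarrow> (u x t)\<^sup>2 \<le> IP t + IQ t"
proof -
  assume x: "x \<in> {0..1}"
  have "(u x t)\<^sup>2 \<le> integral {0..1} (\<lambda>y. (u y t)\<^sup>2 + (ux y t)\<^sup>2)"
    by (rule sup_bound01[OF du_x'[OF t] sl(2)[OF t] _ x]) (use bc t in auto)
  also have "\<dots> = IP t + IQ t" unfolding IP_def IQ_def using sl[OF t] by (intro int_add continuous_intros) auto
  finally show ?thesis .
qed

lemma u_abs: "x \<in> {0..1} \<Longrightarrow> r \<ge> 0 \<Longrightarrow> IP t + IQ t \<le> r\<^sup>2 \<Longrightarrow> \<bar>u x t\<bar> \<le> r"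
proof -
  assume x: "x \<in> {0..1}" and r: "r \<ge> 0" and le: "IP t + IQ t \<le> r\<^sup>2"
  have "(u x t)\<^sup>2 \<le> r\<^sup>2" using u_sup[OF x] le by linarith
  then have "\<bar>u x t\<bar> \<le> \<bar>r\<bar>" by (simp add: abs_le_square_iff)
  then show ?thesis using r by simp
qed

lemma Eg_le: "IEg t \<le> K * IP t / 2"
proof -
  have "IEg t \<le> integral {0..1} (\<lambda>x. K / 2 * (u x t)\<^sup>2)"
    unfolding IEg_def using sl[OF t] sl_G[OF t] G_le
    by (intro int_le continuous_intros) auto
  then show ?thesis by (simp add: IP_def)
qed

lemma Eg_abs: "r \<ge> 0 \<Longrightarrow> IP t + IQ t \<le> r\<^sup>2 \<Longrightarrow> \<bar>IEg t\<bar> \<le> Mb r * IP t"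
proof -
  assume r: "r \<ge> 0" and le: "IP t + IQ t \<le> r\<^sup>2"
  have "\<bar>IEg t\<bar> \<le> integral {0..1} (\<lambda>x. Mb r * (u x t)\<^sup>2)"
    unfolding IEg_def using sl[OF t] sl_G[OF t]
  proof (intro int_abs_le continuous_intros)
    fix x :: real assume "x \<in> {0<..<1}"
    then have "\<bar>u x t\<bar> \<le> r" using u_abs[OF _ r le] by auto
    moreover have "\<And>z. \<bar>z\<bar> \<le> r \<Longrightarrow> \<bar>F' z\<bar> \<le> Mb r" by (rule Mb)
    ultimately show "\<bar>prim F (u x t)\<bar> \<le> Mb r * (u x t)\<^sup>2" using G_abs_le by blast
  qed auto
  then show ?thesis by (simp add: IP_def)
qed

lemma Huv_abs: "\<bar>IHuv t\<bar> \<le> (IP t + IR t) / 2"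
proof -
  have "\<bar>IHuv t\<bar> \<le> integral {0..1} (\<lambda>x. (u x t)\<^sup>2 / 2 + (v x t)\<^sup>2 / 2)"
    unfolding IHuv_def using sl[OF t]
  proof (intro int_abs_le continuous_intros)
    fix x :: real
    show "\<bar>u x t * v x t\<bar> \<le> (u x t)\<^sup>2 / 2 + (v x t)\<^sup>2 / 2"
      by (rule absprod)
  qed auto
  also have "\<dots> = (IP t + IR t) / 2"
    unfolding IP_def IR_def using sl[OF t] by (subst int_add) (auto intro!: continuous_intros)
  finally show ?thesis .
qed

lemma UF_le: "IUF t \<le> K * IP t"
proof -
  have "IUF t \<le> integral {0..1} (\<lambda>x. K * (u x t)\<^sup>2)"
    unfolding IUF_def using sl[OF t] sl_F[OF t] sF_le
    by (intro int_le continuous_intros) auto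
  then show ?thesis by (simp add: IP_def)
qed

lemma T_le: "IT t \<le> 2 * (IW t + IR t) / \<epsilon>\<^sup>2"
proof -
  have "IT t \<le> integral {0..1} (\<lambda>x. 2 / \<epsilon>\<^sup>2 * ((w x t)\<^sup>2 + (v x t)\<^sup>2))"
    unfolding IT_def using sl[OF t] sl_w[OF t]
  proof (intro int_le continuous_intros)
    fix x
    have e: "uxx x t = (w x t + v x t) / \<epsilon>" using eps by (simp add: w_def field_simps)
    have "(w x t + v x t)\<^sup>2 \<le> 2 * ((w x t)\<^sup>2 + (v x t)\<^sup>2)" by (rule sq_sum2)
    then have "(w x t + v x t)\<^sup>2 / \<epsilon>\<^sup>2 \<le> 2 * ((w x t)\<^sup>2 + (v x t)\<^sup>2) / \<epsilon>\<^sup>2"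
      by (intro divide_right_mono) auto
    then show "(uxx x t)\<^sup>2 \<le> 2 / \<epsilon>\<^sup>2 * ((w x t)\<^sup>2 + (v x t)\<^sup>2)" by (simp add: e power_divide)
  qed auto
  also have "\<dots> = 2 / \<epsilon>\<^sup>2 * integral {0..1} (\<lambda>x. (w x t)\<^sup>2 + (v x t)\<^sup>2)"
    by (rule Henstock_Kurzweil_Integration.integral_mult_right)
  also have "\<dots> = 2 / \<epsilon>\<^sup>2 * (IW t + IR t)"
    unfolding IW_def IR_def using sl[OF t] sl_w[OF t] by (subst int_add) (auto intro!: continuous_intros)
  finally show ?thesis by simp
qed

lemma W_le: "IW t \<le> 2 * \<epsilon>\<^sup>2 * IT t + 2 * IR t"
proof -
  have "IW t \<le> integral {0..1} (\<lambda>x. 2 * \<epsilon>\<^sup>2 * (uxx x t)\<^sup>2 + 2 * (v x t)\<^sup>2)"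
    unfolding IW_def using sl[OF t] sl_w[OF t]
  proof (intro int_le continuous_intros)
    fix x
    show "(w x t)\<^sup>2 \<le> 2 * \<epsilon>\<^sup>2 * (uxx x t)\<^sup>2 + 2 * (v x t)\<^sup>2"
      using sq_sum2[of "\<epsilon> * uxx x t" "- v x t"]
      by (simp add: w_def power_mult_distrib)
  qed auto
  also have "\<dots> = 2 * \<epsilon>\<^sup>2 * IT t + 2 * IR t"
    unfolding IT_def IR_def using sl[OF t] by (subst int_add) (auto intro!: continuous_intros)
  finally show ?thesis .
qed

end

end



lemma int_lin2: fixes f1 f2 :: "real \<Rightarrow> real"
  assumes "continuous_on {0..1} f1" "continuous_on {0..1} f2"
  shows "integral {0..1} (\<lambda>x. c1 * f1 x + c2 * f2 x) = c1 * integral {0..1} f1 + c2 * integral {0..1} f2"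
  using assms by (subst int_add) (auto intro!: continuous_intros)

lemma int_lin3: fixes f1 f2 f3 :: "real \<Rightarrow> real"
  assumes "continuous_on {0..1} f1" "continuous_on {0..1} f2" "continuous_on {0..1} f3"
  shows "integral {0..1} (\<lambda>x. c1 * f1 x + c2 * f2 x + c3 * f3 x) = c1 * integral {0..1} f1 + c2 * integral {0..1} f2 + c3 * integral {0..1} f3"
  using assms by (subst int_add) (auto intro!: continuous_intros simp: int_lin2)

lemma int_lin4: fixes f1 f2 f3 f4 :: "real \<Rightarrow> real"
  assumes "continuous_on {0..1} f1" "continuous_on {0..1} f2" "continuous_on {0..1} f3" "continuous_on {0..1} f4"
  shows "integral {0..1} (\<lambda>x. c1 * f1 x + c2 * f2 x + c3 * f3 x + c4 * f4 x) = c1 * integral {0..1} f1 + c2 * integral {0..1} f2 + c3 * integral {0..1} f3 + c4 * integral {0..1} f4"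
  using assms by (subst int_add) (auto intro!: continuous_intros simp: int_lin3)

lemma young: fixes a b \<eta> :: real assumes "0 < \<eta>" shows "\<bar>a * b\<bar> \<le> \<eta> * a\<^sup>2 / 2 + b\<^sup>2 / (2 * \<eta>)"
proof -
  have "0 \<le> (\<eta> * \<bar>a\<bar> - \<bar>b\<bar>)\<^sup>2 / (2 * \<eta>)" using assms by simp
  also have "\<dots> = \<eta> * a\<^sup>2 / 2 + b\<^sup>2 / (2 * \<eta>) - \<bar>a * b\<bar>"
    using assms by (simp add: power2_eq_square field_simps abs_mult)
  finally show ?thesis by simp
qed

lemma sq_sum3: fixes a b c :: real shows "(a + b + c)\<^sup>2 \<le> 3 * (a\<^sup>2 + b\<^sup>2 + c\<^sup>2)"
proof -
  have "0 \<le> (a - b)\<^sup>2 + (b - c)\<^sup>2 + (a - c)\<^sup>2" by simp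
  then show ?thesis by (simp add: power2_eq_square algebra_simps)
qed

context sol begin

lemma gam: "t \<ge> t0 \<Longrightarrow> ((\<lambda>y. u y t), (\<lambda>y. v y t)) \<in> Gamma"
proof -
  assume t: "t \<ge> t0"
  have "C2_01 (\<lambda>y. u y t)"
    unfolding C2_01_def
  proof (intro exI conjI)
    show "\<forall>x\<in>{0..1}. ((\<lambda>y. u y t) has_real_derivative ux x t) (at x within {0..1})" using du_x t by auto
    show "\<forall>x\<in>{0..1}. ((\<lambda>y. ux y t) has_real_derivative uxx x t) (at x within {0..1})" using dux_x t by auto
    show "continuous_on {0..1} (\<lambda>x. uxx x t)" using sl(3)[OF t] .
  qed
  then show ?thesis unfolding Gamma_def using sl(4)[OF t] bc[of t] v_bc[of t] t by auto
qed

lemma deriv1: "x \<in> {0<..<1} \<Longrightarrow> t \<ge> t0 \<Longrightarrow> deriv (\<lambda>y. u y t) x = ux x t"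
proof -
  assume x: "x \<in> {0<..<1}" and t: "t \<ge> t0"
  have "((\<lambda>y. u y t) has_real_derivative ux x t) (at x within {0..1})" using du_x x t by auto
  then have "((\<lambda>y. u y t) has_real_derivative ux x t) (at x)" using x by (simp add: at_within_Icc_at)
  then show ?thesis by (rule DERIV_imp_deriv)
qed

lemma deriv2: "x \<in> {0<..<1} \<Longrightarrow> t \<ge> t0 \<Longrightarrow> deriv (deriv (\<lambda>y. u y t)) x = uxx x t"
proof -
  assume x: "x \<in> {0<..<1}" and t: "t \<ge> t0"
  have "((\<lambda>y. ux y t) has_real_derivative uxx x t) (at x within {0..1})" using dux_x x t by auto
  then have "((\<lambda>y. ux y t) has_real_derivative uxx x t) (at x)" using x by (simp add: at_within_Icc_at)
  then have "(deriv (\<lambda>y. u y t) has_real_derivative uxx x t) (at x)"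
    by (rule has_field_derivative_transform_within_open[where S="{0<..<1}"]) (use x t deriv1 in auto)
  then show ?thesis by (rule DERIV_imp_deriv)
qed

lemma d1_eq: "t \<ge> t0 \<Longrightarrow> dist_d1 (\<lambda>y. u y t) (\<lambda>y. v y t) = sqrt (IP t + IQ t + IR t)"
proof -
  assume t: "t \<ge> t0"
  have "integral {0..1} (\<lambda>x. (u x t)\<^sup>2 + (deriv (\<lambda>y. u y t) x)\<^sup>2 + (v x t)\<^sup>2)
      = integral {0..1} (\<lambda>x. 1 * (u x t)\<^sup>2 + 1 * (ux x t)\<^sup>2 + 1 * (v x t)\<^sup>2)"
    by (rule integral_spike[where S="{0,1}"]) (use deriv1 t in auto)
  also have "\<dots> = IP t + IQ t + IR t"
    unfolding IP_def IQ_def IR_def using sl[OF t] by (subst int_lin3) (auto intro!: continuous_intros)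
  finally show ?thesis by (simp add: dist_d1_def)
qed

lemma d_eq: "t \<ge> t0 \<Longrightarrow> dist_d (\<lambda>y. u y t) (\<lambda>y. v y t) = sqrt (IP t + IQ t + IR t + IT t)"
proof -
  assume t: "t \<ge> t0"
  have "integral {0..1} (\<lambda>x. (u x t)\<^sup>2 + (deriv (\<lambda>y. u y t) x)\<^sup>2 + (deriv (deriv (\<lambda>y. u y t)) x)\<^sup>2 + (v x t)\<^sup>2)
      = integral {0..1} (\<lambda>x. 1 * (u x t)\<^sup>2 + 1 * (ux x t)\<^sup>2 + 1 * (uxx x t)\<^sup>2 + 1 * (v x t)\<^sup>2)"
    by (rule integral_spike[where S="{0,1}"]) (use deriv1 deriv2 t in auto)
  also have "\<dots> = IP t + IQ t + IT t + IR t"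
    unfolding IP_def IQ_def IR_def IT_def using sl[OF t] by (subst int_lin4) (auto intro!: continuous_intros)
  finally show ?thesis by (simp add: dist_d_def add_ac)
qed

lemma a_abs: "x \<in> {0<..<1} \<Longrightarrow> t \<ge> t0 \<Longrightarrow>
  \<bar>a x t (u x t) (ux x t) (uxx x t) (v x t)\<bar> \<le> A (sqrt (IP t + IQ t + IR t))"
proof -
  assume x: "x \<in> {0<..<1}" and t: "t \<ge> t0"
  have "\<bar>a x t ((\<lambda>y. u y t) x) (deriv (\<lambda>y. u y t) x) (deriv (deriv (\<lambda>y. u y t)) x) ((\<lambda>y. v y t) x)\<bar>
      \<le> A (dist_d1 (\<lambda>y. u y t) (\<lambda>y. v y t))"
    by (rule a_bnd[OF x _ gam[OF t]]) (use t t00 in simp)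
  then show ?thesis using deriv1[OF x t] deriv2[OF x t] d1_eq[OF t] by simp
qed

lemma Dd_eq: "x \<in> {0<..<1} \<Longrightarrow> t > t0 \<Longrightarrow> Dd x t = a x t (u x t) (ux x t) (uxx x t) (v x t) * v x t"
  using eqn[of x t] by (simp add: Dd_def algebra_simps)


context
  fixes t :: real assumes t': "t > t0"
begin

lemma t: "t \<ge> t0" using t' by simp

lemma DV_ge: "a0 * IR t \<le> IDV t"
proof -
  have "integral {0..1} (\<lambda>x. a0 * (v x t)\<^sup>2) \<le> IDV t"
    unfolding IDV_def using sl[OF t] sl_D[OF t]
  proof (intro int_le_open01 continuous_intros)
    fix x :: real assume x: "x \<in> {0<..<1}"
    have "a0 \<le> a x t (u x t) (ux x t) (uxx x t) (v x t)" using a_low[OF x] t t00 by simp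
    then have "a0 * (v x t)\<^sup>2 \<le> a x t (u x t) (ux x t) (uxx x t) (v x t) * (v x t)\<^sup>2"
      by (intro mult_right_mono) auto
    then show "a0 * (v x t)\<^sup>2 \<le> v x t * Dd x t"
      using Dd_eq[OF x t'] by (simp add: power2_eq_square algebra_simps)
  qed auto
  then show ?thesis by (simp add: IR_def)
qed

lemma UD_abs: "\<eta> > 0 \<Longrightarrow> \<bar>IUD t\<bar> \<le> A (sqrt (IP t + IQ t + IR t)) * (\<eta> * IP t / 2 + IR t / (2 * \<eta>))"
proof -
  assume eta: "\<eta> > 0"
  define Av where "Av = A (sqrt (IP t + IQ t + IR t))"
  have Av0: "0 \<le> Av" unfolding Av_def using nnP[OF t] nnQ[OF t] nnR[OF t] by (intro A_nn) simp
  have "\<bar>IUD t\<bar> \<le> integral {0..1} (\<lambda>x. (Av * \<eta> / 2) * (u x t)\<^sup>2 + (Av / (2 * \<eta>)) * (v x t)\<^sup>2)"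
    unfolding IUD_def using sl[OF t] sl_D[OF t]
  proof (intro int_abs_le continuous_intros)
    fix x :: real assume x: "x \<in> {0<..<1}"
    have "\<bar>u x t * Dd x t\<bar> = \<bar>a x t (u x t) (ux x t) (uxx x t) (v x t)\<bar> * \<bar>u x t * v x t\<bar>"
      using Dd_eq[OF x t'] by (simp add: abs_mult)
    also have "\<dots> \<le> Av * \<bar>u x t * v x t\<bar>"
      using a_abs[OF x t] unfolding Av_def by (intro mult_right_mono) auto
    also have "\<dots> \<le> Av * (\<eta> * (u x t)\<^sup>2 / 2 + (v x t)\<^sup>2 / (2 * \<eta>))"
      using young[OF eta] Av0 by (intro mult_left_mono) auto
    also have "\<dots> = (Av * \<eta> / 2) * (u x t)\<^sup>2 + (Av / (2 * \<eta>)) * (v x t)\<^sup>2"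
      by (simp add: algebra_simps)
    finally show "\<bar>u x t * Dd x t\<bar> \<le> (Av * \<eta> / 2) * (u x t)\<^sup>2 + (Av / (2 * \<eta>)) * (v x t)\<^sup>2" .
  qed auto
  also have "\<dots> = (Av * \<eta> / 2) * IP t + (Av / (2 * \<eta>)) * IR t"
    unfolding IP_def IR_def using sl[OF t] by (subst int_lin2) (auto intro!: continuous_intros)
  also have "\<dots> = Av * (\<eta> * IP t / 2 + IR t / (2 * \<eta>))" by (simp add: algebra_simps)
  finally show ?thesis by (simp add: Av_def)
qed

lemma WZ_le: "r \<ge> 0 \<Longrightarrow> IP t + IQ t \<le> r\<^sup>2 \<Longrightarrow>
  2 * IWZ t \<le> IW t / \<epsilon> + 3 * \<epsilon> * ((A (sqrt (IP t + IQ t + IR t)))\<^sup>2 * IR t + IR t / \<epsilon>\<^sup>2 + (Mb r)\<^sup>2 * IP t)"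
proof -
  assume r: "r \<ge> 0" and le: "IP t + IQ t \<le> r\<^sup>2"
  define Av where "Av = A (sqrt (IP t + IQ t + IR t))"
  have Av0: "0 \<le> Av" unfolding Av_def using nnP[OF t] nnQ[OF t] nnR[OF t] by (intro A_nn) simp
  have "integral {0..1} (\<lambda>x. 2 * (w x t * (Dd x t - v x t / \<epsilon> - F (u x t))))
     \<le> integral {0..1} (\<lambda>x. (1 / \<epsilon>) * (w x t)\<^sup>2 + (3 * \<epsilon> * Av\<^sup>2 + 3 / \<epsilon>) * (v x t)\<^sup>2 + (3 * \<epsilon> * (Mb r)\<^sup>2) * (u x t)\<^sup>2)"
    using sl[OF t] sl_D[OF t] sl_w[OF t] sl_F[OF t]
  proof (intro int_le_open01 continuous_intros)
    fix x :: real assume x: "x \<in> {0<..<1}"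
    define z where "z = Dd x t - v x t / \<epsilon> - F (u x t)"
    have "2 * (w x t * z) \<le> 2 * \<bar>w x t * z\<bar>" by simp
    also have "\<dots> \<le> 2 * ((1 / \<epsilon>) * (w x t)\<^sup>2 / 2 + z\<^sup>2 / (2 * (1 / \<epsilon>)))"
      using young[of "1 / \<epsilon>" "w x t" z] eps by simp
    also have "\<dots> = (1 / \<epsilon>) * (w x t)\<^sup>2 + \<epsilon> * z\<^sup>2" by (simp add: field_simps)
    also have "\<dots> \<le> (1 / \<epsilon>) * (w x t)\<^sup>2 + \<epsilon> * (3 * ((Dd x t)\<^sup>2 + (v x t / \<epsilon>)\<^sup>2 + (F (u x t))\<^sup>2))"
      using sq_sum3[of "Dd x t" "- (v x t / \<epsilon>)" "- F (u x t)"] eps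
      by (intro add_left_mono mult_left_mono) (auto simp: z_def)
    also have "\<dots> \<le> (1 / \<epsilon>) * (w x t)\<^sup>2 + \<epsilon> * (3 * (Av\<^sup>2 * (v x t)\<^sup>2 + (v x t / \<epsilon>)\<^sup>2 + (Mb r)\<^sup>2 * (u x t)\<^sup>2))"
    proof -
      have "(Dd x t)\<^sup>2 = (a x t (u x t) (ux x t) (uxx x t) (v x t))\<^sup>2 * (v x t)\<^sup>2"
        using Dd_eq[OF x t'] by (simp add: power_mult_distrib)
      also have "\<dots> \<le> Av\<^sup>2 * (v x t)\<^sup>2"
      proof (intro mult_right_mono)
        have "\<bar>a x t (u x t) (ux x t) (uxx x t) (v x t)\<bar> \<le> \<bar>Av\<bar>" using a_abs[OF x t] Av0 unfolding Av_def by simp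
        then show "(a x t (u x t) (ux x t) (uxx x t) (v x t))\<^sup>2 \<le> Av\<^sup>2" by (simp add: abs_le_square_iff)
      qed simp
      finally have 1: "(Dd x t)\<^sup>2 \<le> Av\<^sup>2 * (v x t)\<^sup>2" .
      have "\<bar>u x t\<bar> \<le> r" using u_abs[OF t _ r le] x by auto
      moreover have "\<And>z. \<bar>z\<bar> \<le> r \<Longrightarrow> \<bar>F' z\<bar> \<le> Mb r" by (rule Mb)
      ultimately have "\<bar>F (u x t)\<bar> \<le> Mb r * \<bar>u x t\<bar>" using F_abs_le by blast
      also have "\<dots> = \<bar>Mb r * u x t\<bar>" using Mb[of 0 r] r by (simp add: abs_mult)
      finally have "(F (u x t))\<^sup>2 \<le> (Mb r * u x t)\<^sup>2" by (simp add: abs_le_square_iff)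
      then have 2: "(F (u x t))\<^sup>2 \<le> (Mb r)\<^sup>2 * (u x t)\<^sup>2" by (simp add: power_mult_distrib)
      show ?thesis using 1 2 eps by (intro add_left_mono mult_left_mono) auto
    qed
    also have "\<dots> = (1 / \<epsilon>) * (w x t)\<^sup>2 + (3 * \<epsilon> * Av\<^sup>2 + 3 / \<epsilon>) * (v x t)\<^sup>2 + (3 * \<epsilon> * (Mb r)\<^sup>2) * (u x t)\<^sup>2"
      using eps by (simp add: field_simps power2_eq_square)
    finally show "2 * (w x t * (Dd x t - v x t / \<epsilon> - F (u x t)))
       \<le> (1 / \<epsilon>) * (w x t)\<^sup>2 + (3 * \<epsilon> * Av\<^sup>2 + 3 / \<epsilon>) * (v x t)\<^sup>2 + (3 * \<epsilon> * (Mb r)\<^sup>2) * (u x t)\<^sup>2"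
      by (simp add: z_def)
  qed (use eps in auto)
  also have "\<dots> = (1 / \<epsilon>) * IW t + (3 * \<epsilon> * Av\<^sup>2 + 3 / \<epsilon>) * IR t + (3 * \<epsilon> * (Mb r)\<^sup>2) * IP t"
    unfolding IP_def IR_def IW_def using sl[OF t] sl_w[OF t] by (subst int_lin3) (auto intro!: continuous_intros)
  also have "\<dots> = IW t / \<epsilon> + 3 * \<epsilon> * (Av\<^sup>2 * IR t + IR t / \<epsilon>\<^sup>2 + (Mb r)\<^sup>2 * IP t)"
    using eps by (simp add: field_simps power2_eq_square)
  finally show ?thesis by (simp add: IWZ_def Av_def)
qed

end

end



lemma sq_deriv: "(f has_real_derivative D) (at x within S) \<Longrightarrow> ((\<lambda>y. (f y)\<^sup>2) has_real_derivative 2 * (f x * D)) (at x within S)"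
  using DERIV_mult[of f D x S f D] by (simp add: power2_eq_square algebra_simps)

context sol begin

lemma dIR: "t \<ge> t0 \<Longrightarrow> (IR has_real_derivative integral {0..1} (\<lambda>x. 2 * (v x t * utt x t))) (at t within {t0..})"
  unfolding IR_def[abs_def]
  by (rule deriv_int01[where ft="\<lambda>x s. 2 * (v x s * utt x s)"])
     (auto intro!: sq_deriv dv_t jc_from continuous_intros jc)

lemma dIQ: "t \<ge> t0 \<Longrightarrow> (IQ has_real_derivative integral {0..1} (\<lambda>x. 2 * (ux x t * uxt x t))) (at t within {t0..})"
  unfolding IQ_def[abs_def]
  by (rule deriv_int01[where ft="\<lambda>x s. 2 * (ux x s * uxt x s)"])
     (auto intro!: sq_deriv dux_t jc_from continuous_intros jc)

lemma dIEg: "t \<ge> t0 \<Longrightarrow> (IEg has_real_derivative integral {0..1} (\<lambda>x. v x t * F (u x t))) (at t within {t0..})"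
  unfolding IEg_def[abs_def]
proof (rule deriv_int01[where ft="\<lambda>x s. v x s * F (u x s)"])
  fix x s assume "x \<in> {0..1::real}" "s \<in> {t0..}"
  from DERIV_chain2[OF dG du_t[OF this]]
  show "((\<lambda>s. prim F (u x s)) has_real_derivative v x s * F (u x s)) (at s within {t0..})"
    by (simp add: mult.commute)
qed (auto intro!: jc_from continuous_intros jc jc_Gu jc_Fu)

lemma dIHuv: "t \<ge> t0 \<Longrightarrow> (IHuv has_real_derivative integral {0..1} (\<lambda>x. (v x t)\<^sup>2 + u x t * utt x t)) (at t within {t0..})"
  unfolding IHuv_def[abs_def]
proof (rule deriv_int01[where ft="\<lambda>x s. (v x s)\<^sup>2 + u x s * utt x s"])
  fix x s assume "x \<in> {0..1::real}" "s \<in> {t0..}"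
  from DERIV_mult[OF du_t[OF this] dv_t[OF this]]
  show "((\<lambda>s. u x s * v x s) has_real_derivative (v x s)\<^sup>2 + u x s * utt x s) (at s within {t0..})"
    by (simp add: power2_eq_square algebra_simps)
qed (auto intro!: jc_from continuous_intros jc)

lemma dIW: "t \<ge> t0 \<Longrightarrow> (IW has_real_derivative integral {0..1} (\<lambda>x. 2 * (w x t * (\<epsilon> * uxxt x t - utt x t)))) (at t within {t0..})"
  unfolding IW_def[abs_def]
proof (rule deriv_int01[where ft="\<lambda>x s. 2 * (w x s * (\<epsilon> * uxxt x s - utt x s))"])
  fix x s assume xs: "x \<in> {0..1::real}" "s \<in> {t0..}"
  have "((\<lambda>s. w x s) has_real_derivative \<epsilon> * uxxt x s - utt x s) (at s within {t0..})"
    unfolding w_def using DERIV_diff[OF DERIV_cmult[OF duxx_t[OF xs], of \<epsilon>] dv_t[OF xs]] .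
  then show "((\<lambda>s. (w x s)\<^sup>2) has_real_derivative 2 * (w x s * (\<epsilon> * uxxt x s - utt x s))) (at s within {t0..})"
    by (rule sq_deriv)
qed (auto simp: w_def intro!: jc_from continuous_intros jc)


context
  fixes t :: real assumes t: "t \<ge> t0"
begin

lemma ibp_v_ux: "integral {0..1} (\<lambda>x. uxt x t * ux x t) = - integral {0..1} (\<lambda>x. v x t * uxx x t)"
  by (rule ibp01[OF dv_x'[OF t] _ sl(5)[OF t] sl(3)[OF t]]) (use dux_x t v_bc in auto)

lemma ibp_v_uxt: "integral {0..1} (\<lambda>x. uxt x t * uxt x t) = - integral {0..1} (\<lambda>x. v x t * uxxt x t)"
  by (rule ibp01[OF dv_x'[OF t] _ sl(5)[OF t] sl(6)[OF t]]) (use duxt_x t v_bc in auto)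

lemma ibp_u_ux: "integral {0..1} (\<lambda>x. ux x t * ux x t) = - integral {0..1} (\<lambda>x. u x t * uxx x t)"
  by (rule ibp01[OF du_x'[OF t] _ sl(2)[OF t] sl(3)[OF t]]) (use dux_x t bc in auto)

lemma ibp_u_uxt: "integral {0..1} (\<lambda>x. ux x t * uxt x t) = - integral {0..1} (\<lambda>x. u x t * uxxt x t)"
  by (rule ibp01[OF du_x'[OF t] _ sl(2)[OF t] sl(6)[OF t]]) (use duxt_x t bc in auto)

lemma E_ident: "integral {0..1} (\<lambda>x. 2 * (v x t * utt x t)) / 2 + integral {0..1} (\<lambda>x. 2 * (ux x t * uxt x t)) / 2
   - integral {0..1} (\<lambda>x. v x t * F (u x t)) = - \<epsilon> * IS t - IDV t"
proof -
  note c = sl[OF t] sl_F[OF t]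
  have a2: "integral {0..1} (\<lambda>x. ux x t * uxt x t) = integral {0..1} (\<lambda>x. uxt x t * ux x t)"
    by (simp add: mult.commute)
  have DV: "IDV t = integral {0..1} (\<lambda>x. v x t * uxx x t) + \<epsilon> * integral {0..1} (\<lambda>x. v x t * uxxt x t)
      + integral {0..1} (\<lambda>x. v x t * F (u x t)) - integral {0..1} (\<lambda>x. v x t * utt x t)"
  proof -
    have "IDV t = integral {0..1} (\<lambda>x. 1 * (v x t * uxx x t) + \<epsilon> * (v x t * uxxt x t) + 1 * (v x t * F (u x t)) + (-1) * (v x t * utt x t))"
      unfolding IDV_def Dd_def by (simp add: algebra_simps)
    also have "\<dots> = 1 * integral {0..1} (\<lambda>x. v x t * uxx x t) + \<epsilon> * integral {0..1} (\<lambda>x. v x t * uxxt x t)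
      + 1 * integral {0..1} (\<lambda>x. v x t * F (u x t)) + (-1) * integral {0..1} (\<lambda>x. v x t * utt x t)"
      using c by (subst int_lin4) (auto intro!: continuous_intros)
    finally show ?thesis by simp
  qed
  have S: "IS t = integral {0..1} (\<lambda>x. uxt x t * uxt x t)" by (simp add: IS_def power2_eq_square)
  show ?thesis using DV S a2 ibp_v_ux ibp_v_uxt by simp
qed

lemma H_ident: "integral {0..1} (\<lambda>x. (v x t)\<^sup>2 + u x t * utt x t) + \<epsilon> / 2 * integral {0..1} (\<lambda>x. 2 * (ux x t * uxt x t))
   = IR t - IQ t + IUF t - IUD t"
proof -
  note c = sl[OF t] sl_F[OF t]
  have UD: "IUD t = integral {0..1} (\<lambda>x. u x t * uxx x t) + \<epsilon> * integral {0..1} (\<lambda>x. u x t * uxxt x t)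
      + IUF t - integral {0..1} (\<lambda>x. u x t * utt x t)"
  proof -
    have "IUD t = integral {0..1} (\<lambda>x. 1 * (u x t * uxx x t) + \<epsilon> * (u x t * uxxt x t) + 1 * (u x t * F (u x t)) + (-1) * (u x t * utt x t))"
      unfolding IUD_def Dd_def by (simp add: algebra_simps)
    also have "\<dots> = 1 * integral {0..1} (\<lambda>x. u x t * uxx x t) + \<epsilon> * integral {0..1} (\<lambda>x. u x t * uxxt x t)
      + 1 * integral {0..1} (\<lambda>x. u x t * F (u x t)) + (-1) * integral {0..1} (\<lambda>x. u x t * utt x t)"
      using c by (subst int_lin4) (auto intro!: continuous_intros)
    finally show ?thesis by (simp add: IUF_def)
  qed
  have Q: "IQ t = integral {0..1} (\<lambda>x. ux x t * ux x t)" by (simp add: IQ_def power2_eq_square)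
  have "integral {0..1} (\<lambda>x. (v x t)\<^sup>2 + u x t * utt x t) = IR t + integral {0..1} (\<lambda>x. u x t * utt x t)"
    unfolding IR_def using c by (subst int_add) (auto intro!: continuous_intros)
  then show ?thesis using UD Q ibp_u_ux ibp_u_uxt by simp
qed

lemma W_ident: "integral {0..1} (\<lambda>x. 2 * (w x t * (\<epsilon> * uxxt x t - utt x t))) = - 2 * IW t / \<epsilon> + 2 * IWZ t"
proof -
  note c = sl[OF t] sl_F[OF t] sl_D[OF t] sl_w[OF t]
  have "integral {0..1} (\<lambda>x. 2 * (w x t * (\<epsilon> * uxxt x t - utt x t)))
     = integral {0..1} (\<lambda>x. 2 * (w x t * (Dd x t - v x t / \<epsilon> - F (u x t))) + (- 2 / \<epsilon>) * (w x t)\<^sup>2)"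
  proof (rule integral_cong)
    fix x
    have e1: "\<epsilon> * uxxt x t - utt x t = Dd x t - (w x t + v x t) / \<epsilon> - F (u x t)"
      using eps by (simp add: Dd_def w_def field_simps)
    have "2 * (w x t * (\<epsilon> * uxxt x t - utt x t)) = 2 * (w x t * (Dd x t - (w x t + v x t) / \<epsilon> - F (u x t)))"
      by (simp only: e1)
    also have "\<dots> = 2 * (w x t * (Dd x t - v x t / \<epsilon> - F (u x t))) + (- 2 / \<epsilon>) * (w x t)\<^sup>2"
      by (simp add: add_divide_distrib power2_eq_square algebra_simps)
    finally show "2 * (w x t * (\<epsilon> * uxxt x t - utt x t)) = 2 * (w x t * (Dd x t - v x t / \<epsilon> - F (u x t))) + (- 2 / \<epsilon>) * (w x t)\<^sup>2" .
  qed
  also have "\<dots> = 2 * IWZ t + (- 2 / \<epsilon>) * IW t"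
    unfolding IWZ_def IW_def using c eps by (subst int_lin2) (auto intro!: continuous_intros)
  finally show ?thesis by simp
qed

end

end



lemma cont_from_within_Ici:
  fixes f :: "real \<Rightarrow> real"
  assumes "\<And>t. t \<ge> t0 \<Longrightarrow> (f has_real_derivative D t) (at t within {t0..})"
  shows "continuous_on {t0..} f"
  unfolding continuous_on_eq_continuous_within
proof
  fix t :: real assume "t \<in> {t0..}"
  then show "continuous (at t within {t0..}) f" using assms by (auto intro: DERIV_continuous)
qed

context sol begin

lemma dE: "t \<ge> t0 \<Longrightarrow> ((\<lambda>t. IR t / 2 + IQ t / 2 - IEg t) has_real_derivative (- \<epsilon> * IS t - IDV t)) (at t within {t0..})"
proof -
  assume t: "t \<ge> t0"
  have "((\<lambda>t. IR t / 2 + IQ t / 2 - IEg t) has_real_derivative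
      integral {0..1} (\<lambda>x. 2 * (v x t * utt x t)) / 2 + integral {0..1} (\<lambda>x. 2 * (ux x t * uxt x t)) / 2
   - integral {0..1} (\<lambda>x. v x t * F (u x t))) (at t within {t0..})"
    by (intro DERIV_diff DERIV_add DERIV_cdivide dIR dIQ dIEg t)
  then show ?thesis using E_ident[OF t] by simp
qed

lemma dH: "t \<ge> t0 \<Longrightarrow> ((\<lambda>t. IHuv t + \<epsilon> / 2 * IQ t) has_real_derivative (IR t - IQ t + IUF t - IUD t)) (at t within {t0..})"
proof -
  assume t: "t \<ge> t0"
  have "((\<lambda>t. IHuv t + \<epsilon> / 2 * IQ t) has_real_derivative
      integral {0..1} (\<lambda>x. (v x t)\<^sup>2 + u x t * utt x t) + \<epsilon> / 2 * integral {0..1} (\<lambda>x. 2 * (ux x t * uxt x t))) (at t within {t0..})"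
    by (intro DERIV_add DERIV_cmult dIHuv dIQ t)
  then show ?thesis using H_ident[OF t] by simp
qed

lemma dW: "t \<ge> t0 \<Longrightarrow> (IW has_real_derivative (- 2 * IW t / \<epsilon> + 2 * IWZ t)) (at t within {t0..})"
  using dIW W_ident by simp

lemma sol_odehyp:
  assumes c: "0 < c" "c < pi"
  shows "odehyp (c\<^sup>2) \<epsilon> K a0 A Mb t0 IP IQ IR IS IT IW IEg IHuv IDV IUD IUF IWZ"
  unfolding odehyp_def
proof (intro conjI allI impI)
  fix t assume t: "t \<ge> t0"
  show "0 \<le> IP t" "0 \<le> IR t" "0 \<le> IW t" "0 \<le> IT t" using nnP[OF t] nnR[OF t] nnW[OF t] nnT[OF t] .
  show "c\<^sup>2 * IP t \<le> IQ t" by (rule PQ[OF t c])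
  show "c\<^sup>2 * IR t \<le> IS t" by (rule RS[OF t c])
  show "IEg t \<le> K * IP t / 2" by (rule Eg_le[OF t])
  show "\<bar>IHuv t\<bar> \<le> (IP t + IR t) / 2" by (rule Huv_abs[OF t])
  show "IUF t \<le> K * IP t" by (rule UF_le[OF t])
  show "IT t \<le> 2 * (IW t + IR t) / \<epsilon>\<^sup>2" by (rule T_le[OF t])
  show "IW t \<le> 2 * \<epsilon>\<^sup>2 * IT t + 2 * IR t" by (rule W_le[OF t])
  fix r :: real assume "r \<ge> 0" "IP t + IQ t \<le> r\<^sup>2"
  then show "\<bar>IEg t\<bar> \<le> Mb r * IP t" by (rule Eg_abs[OF t])
next
  fix t assume t: "t > t0"
  then have t': "t \<ge> t0" by simp
  show "a0 * IR t \<le> IDV t" by (rule DV_ge[OF t])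
  show "((\<lambda>t. IR t / 2 + IQ t / 2 - IEg t) has_real_derivative (- \<epsilon> * IS t - IDV t)) (at t)"
    by (rule within_Ici_at[OF dE[OF t'] t])
  show "((\<lambda>t. IHuv t + \<epsilon> / 2 * IQ t) has_real_derivative (IR t - IQ t + IUF t - IUD t)) (at t)"
    by (rule within_Ici_at[OF dH[OF t'] t])
  show "(IW has_real_derivative (- 2 * IW t / \<epsilon> + 2 * IWZ t)) (at t)"
    by (rule within_Ici_at[OF dW[OF t'] t])
  {
    fix \<eta> :: real assume "\<eta> > 0"
    then show "\<bar>IUD t\<bar> \<le> A (sqrt (IP t + IQ t + IR t)) * (\<eta> * IP t / 2 + IR t / (2 * \<eta>))"
      by (rule UD_abs[OF t])
  }
  fix r :: real assume "r \<ge> 0" "IP t + IQ t \<le> r\<^sup>2"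
  then show "2 * IWZ t \<le> IW t / \<epsilon> + 3 * \<epsilon> * ((A (sqrt (IP t + IQ t + IR t)))\<^sup>2 * IR t + IR t / \<epsilon>\<^sup>2 + (Mb r)\<^sup>2 * IP t)"
    by (rule WZ_le[OF t])
next
  show "continuous_on {t0..} (\<lambda>t. IR t / 2 + IQ t / 2 - IEg t)" by (rule cont_from_within_Ici[OF dE])
  show "continuous_on {t0..} (\<lambda>t. IHuv t + \<epsilon> / 2 * IQ t)" by (rule cont_from_within_Ici[OF dH])
  show "continuous_on {t0..} IW" by (rule cont_from_within_Ici[OF dW])
qed

end



lemma deriv_local:
  fixes f g :: "real \<Rightarrow> real"
  assumes "open S" "x \<in> S" "\<And>y. y \<in> S \<Longrightarrow> f y = g y"
  shows "deriv f x = deriv g x"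
proof -
  have "(f has_real_derivative D) (at x) \<longleftrightarrow> (g has_real_derivative D) (at x)" for D
  proof
    assume "(f has_real_derivative D) (at x)"
    then show "(g has_real_derivative D) (at x)"
      by (rule has_field_derivative_transform_within_open[OF _ assms(1,2)]) (use assms(3) in auto)
  next
    assume "(g has_real_derivative D) (at x)"
    then show "(f has_real_derivative D) (at x)"
      by (rule has_field_derivative_transform_within_open[OF _ assms(1,2)]) (use assms(3) in auto)
  qed
  then show ?thesis unfolding deriv_def by simp
qed

lemma dist_d_cong:
  assumes "\<And>x. x \<in> {0..1} \<Longrightarrow> \<phi> x = \<phi>' x" "\<And>x. x \<in> {0..1} \<Longrightarrow> \<psi> x = \<psi>' x"
  shows "dist_d \<phi> \<psi> = dist_d \<phi>' \<psi>'"
proof -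
  have d1: "deriv \<phi> x = deriv \<phi>' x" if "x \<in> {0<..<1}" for x
    by (rule deriv_local[where S="{0<..<1}"]) (use that assms in auto)
  have d2: "deriv (deriv \<phi>) x = deriv (deriv \<phi>') x" if "x \<in> {0<..<1}" for x
    by (rule deriv_local[where S="{0<..<1}"]) (use that d1 in auto)
  have "integral {0..1} (\<lambda>x. (\<phi> x)\<^sup>2 + (deriv \<phi> x)\<^sup>2 + (deriv (deriv \<phi>) x)\<^sup>2 + (\<psi> x)\<^sup>2)
     = integral {0..1} (\<lambda>x. (\<phi>' x)\<^sup>2 + (deriv \<phi>' x)\<^sup>2 + (deriv (deriv \<phi>') x)\<^sup>2 + (\<psi>' x)\<^sup>2)"
    by (rule integral_spike[where S="{0,1}"]) (use assms d1 d2 in auto)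
  then show ?thesis by (simp add: dist_d_def)
qed

theorem theorem3:
  fixes \<epsilon> K :: real and F :: "real \<Rightarrow> real"
    and a :: "real \<Rightarrow> real \<Rightarrow> real \<Rightarrow> real \<Rightarrow> real \<Rightarrow> real \<Rightarrow> real"
    and A :: "real \<Rightarrow> real"
  assumes eps: "\<epsilon> > 0"
    and F_C1: "\<forall>s. F differentiable (at s)" "continuous_on UNIV (deriv F)"
    and a_cont: "continuous_on ({0<..<1} \<times> {0..} \<times> UNIV \<times> UNIV \<times> UNIV \<times> UNIV)
                   (\<lambda>(x, t, p, q, r, s). a x t p q r s)"
    and F0: "F 0 = 0"
    and K: "K > 0" "K < 3 * pi\<^sup>2 / 4" "\<forall>s. deriv F s \<le> K"
    and a_inf: "bdd_below ((\<lambda>(x, t, p, q, r, s). a x t p q r s) `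
                   ({0<..<1} \<times> {0..} \<times> UNIV \<times> UNIV \<times> UNIV \<times> UNIV))"
      "(INF (x, t, p, q, r, s) \<in> {0<..<1} \<times> {0..} \<times> UNIV \<times> UNIV \<times> UNIV \<times> UNIV.
          a x t p q r s) > - \<epsilon> * pi\<^sup>2"
    and A_mono: "mono_on {0..} A" and A_nonneg: "\<forall>r\<ge>0. A r \<ge> 0"
    and a_bound: "\<forall>x\<in>{0<..<1}. \<forall>t\<ge>0. \<forall>(\<phi>, \<psi>)\<in>Gamma.
          \<bar>a x t (\<phi> x) (deriv \<phi> x) (deriv (deriv \<phi>) x) (\<psi> x)\<bar> \<le> A (dist_d1 \<phi> \<psi>)"
  shows "exp_stable_in_large \<epsilon> F a"
proof -
  define a0 where "a0 = (INF (x, t, p, q, r, s) \<in> {0<..<1} \<times> {0..} \<times> UNIV \<times> UNIV \<times> UNIV \<times> UNIV.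
          a x t p q r s)"
  have a_low: "a0 \<le> a x t p q r s" if "x \<in> {0<..<1}" "t \<ge> 0" for x t p q r s
  proof -
    have "a0 \<le> (\<lambda>(x, t, p, q, r, s). a x t p q r s) (x, t, p, q, r, s)"
      unfolding a0_def by (rule cINF_lower[OF a_inf(1)]) (use that in auto)
    then show ?thesis by simp
  qed
  have a0e: "- \<epsilon> * pi\<^sup>2 < a0" using a_inf(2) by (simp add: a0_def)
  have dF: "\<And>s. (F has_real_derivative deriv F s) (at s)"
    using F_C1(1) DERIV_deriv_iff_real_differentiable by blast
  have FH: "Fhyp F (deriv F) K"
    by (rule Fhyp.intro) (use dF F_C1(2) F0 K(3) in auto)
  define m where "m = max K (- a0 / \<epsilon>)"
  define \<mu> where "\<mu> = (pi\<^sup>2 + m) / 2"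
  define c where "c = sqrt \<mu>"
  have Kpi: "K < pi\<^sup>2"
  proof -
    have "0 \<le> pi\<^sup>2" by simp
    then show ?thesis using K(2) by linarith
  qed
  have a0pi: "- a0 / \<epsilon> < pi\<^sup>2" using a0e eps by (simp add: field_simps)
  have m: "m < pi\<^sup>2" "K \<le> m" "- a0 / \<epsilon> \<le> m" using Kpi a0pi by (auto simp: m_def)
  have mu: "m < \<mu>" "\<mu> < pi\<^sup>2" using m by (auto simp: \<mu>_def)
  have mu0: "0 < \<mu>" using mu m K(1) by linarith
  have c: "0 < c" "c < pi" "c\<^sup>2 = \<mu>"
  proof -
    show "0 < c" using mu0 by (simp add: c_def)
    show "c\<^sup>2 = \<mu>" using mu0 by (simp add: c_def)
    have "sqrt \<mu> < sqrt (pi\<^sup>2)" using mu by (intro real_sqrt_less_mono) auto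
    then show "c < pi" by (simp add: c_def)
  qed
  have Kmu: "K < \<mu>" using mu m by linarith
  have emu: "0 < \<epsilon> * \<mu> + a0"
  proof -
    have "- a0 / \<epsilon> < \<mu>" using mu m by linarith
    then have "- a0 < \<mu> * \<epsilon>" using eps by (simp add: field_simps)
    then show ?thesis by (simp add: algebra_simps)
  qed
  define Mb where "Mb r = (SOME M. M \<ge> 0 \<and> (\<forall>z. \<bar>z\<bar> \<le> r \<longrightarrow> \<bar>deriv F z\<bar> \<le> M))" for r
  have Mb: "Mb r \<ge> 0 \<and> (\<forall>z. \<bar>z\<bar> \<le> r \<longrightarrow> \<bar>deriv F z\<bar> \<le> Mb r)" for r
    unfolding Mb_def by (rule someI_ex) (rule Fhyp.F'_bound[OF FH])
  have Mb_nn: "\<And>r. Mb r \<ge> 0" using Mb by blast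
  have A_nn: "\<And>r. r \<ge> 0 \<Longrightarrow> A r \<ge> 0" using A_nonneg by blast
  show ?thesis
    unfolding exp_stable_in_large_def
  proof (intro allI impI)
    fix \<alpha> :: real assume \<alpha>: "\<alpha> > 0"
    from ode_main[where \<mu>=\<mu> and \<epsilon>=\<epsilon> and K=K and A=A and Mb=Mb and \<alpha>=\<alpha>, OF eps mu0 K(1) Kmu emu A_mono A_nn Mb_nn \<alpha>]
    obtain Dc Cc where DC: "Dc > 0" "Cc > 0"
      and prp: "\<And>t0 P Q R S T W Eg Huv DV UD UF WZ t.
     odehyp \<mu> \<epsilon> K a0 A Mb t0 P Q R S T W Eg Huv DV UD UF WZ \<and>
     sqrt (P t0 + Q t0 + R t0 + T t0) \<le> \<alpha> \<and> t \<ge> t0 \<Longrightarrow>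
     sqrt (P t + Q t + R t + T t) \<le> Dc * exp (- Cc * (t - t0)) * sqrt (P t0 + Q t0 + R t0 + T t0)"
      by blast
    show "\<exists>D C. D > 0 \<and> C > 0 \<and>
     (\<forall>t0\<ge>0. \<forall>u0 u1 u v.
        (u0, u1) \<in> Gamma \<and> dist_d u0 u1 \<le> \<alpha> \<and> is_solution \<epsilon> F a t0 u v \<and>
        (\<forall>x\<in>{0..1}. u x t0 = u0 x \<and> v x t0 = u1 x) \<longrightarrow>
        (\<forall>t\<ge>t0. dist_d (\<lambda>x. u x t) (\<lambda>x. v x t) \<le> D * exp (- C * (t - t0)) * dist_d u0 u1))"
    proof (intro exI conjI allI impI)
      show "Dc > 0" "Cc > 0" using DC .
      fix t0 :: real and u0 u1 :: "real \<Rightarrow> real" and u v :: "real \<Rightarrow> real \<Rightarrow> real" and t :: real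
      assume t00: "t0 \<ge> 0"
        and H: "(u0, u1) \<in> Gamma \<and> dist_d u0 u1 \<le> \<alpha> \<and> is_solution \<epsilon> F a t0 u v \<and>
        (\<forall>x\<in>{0..1}. u x t0 = u0 x \<and> v x t0 = u1 x)"
        and t: "t \<ge> t0"
      from H obtain ux uxx uxt uxxt utt where
        D: "\<forall>x\<in>{0..1}. \<forall>t\<in>{t0..}.
        ((\<lambda>y. u y t) has_real_derivative ux x t) (at x within {0..1}) \<and>
        ((\<lambda>y. ux y t) has_real_derivative uxx x t) (at x within {0..1}) \<and>
        ((\<lambda>s. u x s) has_real_derivative v x t) (at t within {t0..}) \<and>
        ((\<lambda>y. v y t) has_real_derivative uxt x t) (at x within {0..1}) \<and>
        ((\<lambda>y. uxt y t) has_real_derivative uxxt x t) (at x within {0..1}) \<and>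
        ((\<lambda>s. v x s) has_real_derivative utt x t) (at t within {t0..})"
        and C: "continuous_on ({0..1} \<times> {t0..}) (\<lambda>(x,t). u x t)"
     "continuous_on ({0..1} \<times> {t0..}) (\<lambda>(x,t). ux x t)"
     "continuous_on ({0..1} \<times> {t0..}) (\<lambda>(x,t). uxx x t)"
     "continuous_on ({0..1} \<times> {t0..}) (\<lambda>(x,t). v x t)"
     "continuous_on ({0..1} \<times> {t0..}) (\<lambda>(x,t). uxt x t)"
     "continuous_on ({0..1} \<times> {t0..}) (\<lambda>(x,t). uxxt x t)"
     "continuous_on ({0..1} \<times> {t0..}) (\<lambda>(x,t). utt x t)"
        and E: "\<forall>x\<in>{0<..<1}. \<forall>t\<in>{t0<..}.
        - \<epsilon> * uxxt x t + utt x t - uxx x t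
          = F (u x t) - a x t (u x t) (ux x t) (uxx x t) (v x t) * v x t"
        and B: "\<forall>t\<in>{t0..}. u 0 t = 0 \<and> u 1 t = 0"
        unfolding is_solution_def by blast
      have S: "sol F (deriv F) K \<epsilon> a A a0 Mb t0 u v ux uxx uxt uxxt utt"
      proof (rule sol.intro[OF FH], rule sol_axioms.intro)
        show "0 < \<epsilon>" using eps .
        show "0 \<le> t0" using t00 .
        show "\<And>x t. x \<in> {0..1} \<Longrightarrow> t \<in> {t0..} \<Longrightarrow> ((\<lambda>y. u y t) has_real_derivative ux x t) (at x within {0..1})"
          using D by blast
        show "\<And>x t. x \<in> {0..1} \<Longrightarrow> t \<in> {t0..} \<Longrightarrow> ((\<lambda>y. ux y t) has_real_derivative uxx x t) (at x within {0..1})"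
          using D by blast
        show "\<And>x t. x \<in> {0..1} \<Longrightarrow> t \<in> {t0..} \<Longrightarrow> ((\<lambda>s. u x s) has_real_derivative v x t) (at t within {t0..})"
          using D by blast
        show "\<And>x t. x \<in> {0..1} \<Longrightarrow> t \<in> {t0..} \<Longrightarrow> ((\<lambda>y. v y t) has_real_derivative uxt x t) (at x within {0..1})"
          using D by blast
        show "\<And>x t. x \<in> {0..1} \<Longrightarrow> t \<in> {t0..} \<Longrightarrow> ((\<lambda>y. uxt y t) has_real_derivative uxxt x t) (at x within {0..1})"
          using D by blast
        show "\<And>x t. x \<in> {0..1} \<Longrightarrow> t \<in> {t0..} \<Longrightarrow> ((\<lambda>s. v x s) has_real_derivative utt x t) (at t within {t0..})"
          using D by blast
        show "\<And>x t. x \<in> {0<..<1} \<Longrightarrow> t \<in> {t0<..} \<Longrightarrow>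
          - \<epsilon> * uxxt x t + utt x t - uxx x t = F (u x t) - a x t (u x t) (ux x t) (uxx x t) (v x t) * v x t"
          using E by blast
        show "\<And>t. t \<in> {t0..} \<Longrightarrow> u 0 t = 0 \<and> u 1 t = 0" using B by blast
        show "\<And>x t p q r s. x \<in> {0<..<1} \<Longrightarrow> 0 \<le> t \<Longrightarrow> a0 \<le> a x t p q r s" using a_low by blast
        show "\<And>x t \<phi> \<psi>. x \<in> {0<..<1} \<Longrightarrow> 0 \<le> t \<Longrightarrow> (\<phi>, \<psi>) \<in> Gamma \<Longrightarrow>
          \<bar>a x t (\<phi> x) (deriv \<phi> x) (deriv (deriv \<phi>) x) (\<psi> x)\<bar> \<le> A (dist_d1 \<phi> \<psi>)"
          using a_bound by fastforce
        show "\<And>r. 0 \<le> r \<Longrightarrow> 0 \<le> A r" using A_nn by blast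
        show "\<And>r z. \<bar>z\<bar> \<le> r \<Longrightarrow> \<bar>deriv F z\<bar> \<le> Mb r" using Mb by blast
      qed (use C in auto)
      have OH: "odehyp \<mu> \<epsilon> K a0 A Mb t0 (sol.IP u) (sol.IQ ux) (sol.IR v) (sol.IS uxt) (sol.IT uxx)
          (sol.IW \<epsilon> v uxx) (sol.IEg F u) (sol.IHuv u v) (sol.IDV F \<epsilon> u v uxx uxxt utt)
          (sol.IUD F \<epsilon> u uxx uxxt utt) (sol.IUF F u) (sol.IWZ F \<epsilon> u v uxx uxxt utt)"
        using sol.sol_odehyp[OF S c(1,2)] c(3) by simp
      have dt: "dist_d (\<lambda>x. u x t) (\<lambda>x. v x t) = sqrt (sol.IP u t + sol.IQ ux t + sol.IR v t + sol.IT uxx t)"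
        using sol.d_eq[OF S t] .
      have d0: "dist_d u0 u1 = sqrt (sol.IP u t0 + sol.IQ ux t0 + sol.IR v t0 + sol.IT uxx t0)"
      proof -
        have "dist_d u0 u1 = dist_d (\<lambda>x. u x t0) (\<lambda>x. v x t0)"
          by (rule dist_d_cong) (use H in auto)
        then show ?thesis using sol.d_eq[OF S order_refl] by simp
      qed
      show "dist_d (\<lambda>x. u x t) (\<lambda>x. v x t) \<le> Dc * exp (- Cc * (t - t0)) * dist_d u0 u1"
        unfolding dt d0 by (rule prp) (use OH H d0 t in auto)
    qed
  qed
qed


end
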